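(* Let $K:\mathbb B_d\times\mathbb B_d\to\mathcal M_d(\mathbb C)$ be a sesqui-analytic Hermitian function which is quasi-invariant with multiplier $c(u)=u$, i.e. $$u\,K(u^{-1}\cdot\boldsymbol z,u^{-1}\cdot\boldsymbol w)\,u^*=K(\boldsymbol z,\boldsymbol w)\quad\text{for all }u\in\mathcal U(d),\ \boldsymbol z,\boldsymbol w\in\mathbb B_d.$$ Then there are complex numbers $\alpha_j$ ($j\geq0$) and $\beta_j$ ($j\geq1$) such that $$K(\boldsymbol z,\boldsymbol w)=\sum_{j=0}^\infty\alpha_j\hat K_j(\boldsymbol z,\boldsymbol w)+\sum_{j=1}^\infty\beta_j\hat K_j^\perp(\boldsymbol z,\boldsymbol w).$$
   Context: $\mathbb B_d$ is the open unit ball of $\mathbb C^d$, $\mathcal U(d)$ the unitary group, $\langle\boldsymbol z,\boldsymbol w\rangle=\sum_i z_i\bar w_i$. Sesqui-analytic means holomorphic in $\boldsymbol z$ and anti-holomorphic in $\boldsymbol w$; Hermitian means $K(\boldsymbol z,\boldsymbol w)^*=K(\boldsymbol w,\boldsymbol z)$. $\mathcal P_\ell$ denotes homogeneous polynomials of degree $\ell$ in $d$ variables with the Fischer–Fock inner product ($\langle\boldsymbol z^\alpha,\boldsymbol z^\beta\rangle=\alpha!\,\delta_{\alpha\beta}$), and $\mathbb C^d\otimes\mathcal P_\ell$ carries the tensor product inner product. Let $\hat{\mathcal V}_\ell=\{f=(f_1,\ldots,f_d)\in\mathbb C^d\otimes\mathcal P_\ell:\partial_1f_1+\cdots+\partial_df_d=0\}$,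 $\hat K_\ell$ its reproducing kernel and $\hat K_\ell^\perp$ the reproducing kernel of its orthogonal complement in $\mathbb C^d\otimes\mathcal P_\ell$. Explicitly $\hat K_0=I_d$, and for $\ell\ge1$, $\hat K_\ell(\boldsymbol z,\boldsymbol w)=\frac{1}{(\ell+d-1)(\ell-1)!}\langle\boldsymbol z,\boldsymbol w\rangle^{\ell-1}\big(\frac{\ell+d-1}{\ell}\langle\boldsymbol z,\boldsymbol w\rangle I_d-\boldsymbol z\bar{\boldsymbol w}^\dagger\big)$ and $\hat K_\ell^\perp(\boldsymbol z,\boldsymbol w)=\frac{1}{(\ell+d-1)(\ell-1)!}\langle\boldsymbol z,\boldsymbol w\rangle^{\ell-1}\boldsymbol z\bar{\boldsymbol w}^\dagger$, where $\boldsymbol z\bar{\boldsymbol w}^\dagger$ is the matrix with $(i,j)$ entry $z_i\bar w_j$. *)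

theory Defs
  imports "HOL-Analysis.Analysis"
begin

text \<open>Vectors in C^d are complex ^ 'd, d = CARD('d); d x d matrices are complex ^ 'd ^ 'd.\<close>

definition cinner :: "complex ^ 'd \<Rightarrow> complex ^ 'd \<Rightarrow> complex" where
  "cinner z w = (\<Sum>i\<in>UNIV. z $ i * cnj (w $ i))"

definition cadj :: "complex ^ 'd ^ 'd \<Rightarrow> complex ^ 'd ^ 'd" where
  "cadj U = (\<chi> i j. cnj (U $ j $ i))"

definition unitary_mat :: "complex ^ 'd ^ 'd \<Rightarrow> bool" where
  "unitary_mat U \<longleftrightarrow> U ** cadj U = mat 1 \<and> cadj U ** U = mat 1"

definition cscale :: "complex \<Rightarrow> complex ^ 'd ^ 'd \<Rightarrow> complex ^ 'd ^ 'd" where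
  "cscale a M = (\<chi> i j. a * M $ i $ j)"

definition outer :: "complex ^ 'd \<Rightarrow> complex ^ 'd \<Rightarrow> complex ^ 'd ^ 'd" where
  "outer z w = (\<chi> i j. z $ i * cnj (w $ j))"

definition holo_on :: "(complex ^ 'd) set \<Rightarrow> (complex ^ 'd \<Rightarrow> complex) \<Rightarrow> bool" where
  "holo_on S f \<longleftrightarrow> (\<forall>z\<in>S. \<exists>f'. (f has_derivative f') (at z) \<and> (\<forall>c v. f' (c *s v) = c * f' v))"

definition sesqui_analytic :: "(complex ^ 'd \<Rightarrow> complex ^ 'd \<Rightarrow> complex ^ 'd ^ 'd) \<Rightarrow> bool" where
  "sesqui_analytic K \<longleftrightarrow>
     (\<forall>w\<in>ball 0 1. \<forall>i j. holo_on (ball 0 1) (\<lambda>z. K z w $ i $ j)) \<and>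
     (\<forall>z\<in>ball 0 1. \<forall>i j. holo_on (ball 0 1) (\<lambda>w. cnj (K z w $ i $ j)))"

definition hermitian_kernel :: "(complex ^ 'd \<Rightarrow> complex ^ 'd \<Rightarrow> complex ^ 'd ^ 'd) \<Rightarrow> bool" where
  "hermitian_kernel K \<longleftrightarrow> (\<forall>z\<in>ball 0 1. \<forall>w\<in>ball 0 1. cadj (K z w) = K w z)"

definition quasi_invariant_id :: "(complex ^ 'd \<Rightarrow> complex ^ 'd \<Rightarrow> complex ^ 'd ^ 'd) \<Rightarrow> bool" where
  "quasi_invariant_id K \<longleftrightarrow> (\<forall>U z w. unitary_mat U \<longrightarrow> z \<in> ball 0 1 \<longrightarrow> w \<in> ball 0 1 \<longrightarrow>
      U ** K (cadj U *v z) (cadj U *v w) ** cadj U = K z w)"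

definition Khat :: "nat \<Rightarrow> complex ^ 'd \<Rightarrow> complex ^ 'd \<Rightarrow> complex ^ 'd ^ 'd" where
  "Khat l z w = (if l = 0 then mat 1 else
     cscale (cinner z w ^ (l - 1) / (of_nat (l + CARD('d) - 1) * of_nat (fact (l - 1))))
       (cscale (of_nat (l + CARD('d) - 1) / of_nat l * cinner z w) (mat 1) - outer z w))"

definition Kperp :: "nat \<Rightarrow> complex ^ 'd \<Rightarrow> complex ^ 'd \<Rightarrow> complex ^ 'd ^ 'd" where
  "Kperp l z w =
     cscale (cinner z w ^ (l - 1) / (of_nat (l + CARD('d) - 1) * of_nat (fact (l - 1)))) (outer z w)"

end

theory Submission
  imports Defs "HOL-Complex_Analysis.Complex_Analysis"
begin


lemma cinner_add_left: "cinner (x + y) u = cinner x u + cinner y u"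
  by (simp add: cinner_def distrib_right sum.distrib)
lemma cinner_add_right: "cinner u (x + y) = cinner u x + cinner u y"
  by (simp add: cinner_def distrib_left sum.distrib)
lemma cinner_diff_left: "cinner (x - y) u = cinner x u - cinner y u"
  by (simp add: cinner_def left_diff_distrib sum_subtractf)
lemma cinner_diff_right: "cinner u (x - y) = cinner u x - cinner u y"
  by (simp add: cinner_def right_diff_distrib sum_subtractf)
lemma cinner_scale_left: "cinner (c *s x) u = c * cinner x u"
  by (simp add: cinner_def sum_distrib_left mult.assoc)
lemma cinner_scale_right: "cinner u (c *s x) = cnj c * cinner u x"
  by (simp add: cinner_def sum_distrib_left algebra_simps)
lemma cinner_zero_left[simp]: "cinner 0 u = 0" by (simp add: cinner_def)
lemma cinner_zero_right[simp]: "cinner u 0 = 0" by (simp add: cinner_def)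
lemma cinner_cnj: "cinner y x = cnj (cinner x y)"
  by (simp add: cinner_def mult.commute)
lemma cinner_axis_right: "cinner x (axis i 1) = x $ i"
proof -
  have "cinner x (axis i 1) = (\<Sum>j\<in>UNIV. if j = i then x$j else 0)"
    unfolding cinner_def by (rule sum.cong) (auto simp: axis_def)
  then show ?thesis by simp
qed
lemma cinner_axis_left: "cinner (axis i 1) x = cnj (x $ i)"
  by (metis cinner_axis_right cinner_cnj)

lemma norm_sq_vec: "(norm (x::complex^'d))^2 = (\<Sum>i\<in>UNIV. (cmod (x$i))^2)"
  by (simp add: norm_vec_def L2_set_def sum_nonneg)

lemma cinner_self: "cinner x x = complex_of_real ((norm x)^2)"
proof -
  have "\<And>i. x$i * cnj (x$i) = complex_of_real ((cmod (x$i))^2)"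
    using complex_norm_square by metis
  then show ?thesis unfolding norm_sq_vec cinner_def of_real_sum by simp
qed

lemma cinner_self_eq_0: "cinner x x = 0 \<longleftrightarrow> x = 0"
  by (simp add: cinner_self)

lemma norm_vsmult: "norm (c *s (x::complex^'d)) = cmod c * norm x"
proof -
  have "(norm (c *s x))^2 = (cmod c * norm x)^2"
    by (simp add: norm_sq_vec power_mult_distrib norm_mult sum_distrib_left)
  then show ?thesis by (simp add: power2_eq_iff_nonneg)
qed

lemma mv_cscale: "cscale a M *v x = a *s (M *v x)"
  by (simp add: cscale_def matrix_vector_mult_def vec_eq_iff sum_distrib_left mult.assoc)
lemma mv_outer: "outer z w *v x = cinner x w *s z"
  by (simp add: outer_def matrix_vector_mult_def vec_eq_iff cinner_def sum_distrib_left algebra_simps)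
lemma mv_add: "(A + B) *v x = A *v x + (B::complex^'d^'d) *v x"
  by (simp add: matrix_vector_mult_def vec_eq_iff sum.distrib algebra_simps)
lemma mv_diff: "(A - B) *v x = A *v x - (B::complex^'d^'d) *v x"
  by (simp add: matrix_vector_mult_def vec_eq_iff sum_subtractf algebra_simps)
lemma mv_vadd: "A *v (x + y) = A *v x + (A::complex^'d^'d) *v y"
  by (simp add: matrix_vector_mult_def vec_eq_iff sum.distrib algebra_simps)
lemma mv_vdiff: "A *v (x - y) = A *v x - (A::complex^'d^'d) *v y"
  by (simp add: matrix_vector_mult_def vec_eq_iff sum_subtractf algebra_simps)
lemma mv_vscale: "A *v (c *s x) = c *s ((A::complex^'d^'d) *v x)"
  by (simp add: matrix_vector_mult_def vec_eq_iff sum_distrib_left algebra_simps)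

lemma cinner_adj: "cinner (M *v x) y = cinner x (cadj M *v y)"
  unfolding cinner_def cadj_def matrix_vector_mult_def
  by (simp add: sum_distrib_left sum_distrib_right sum_divide_distrib mult_ac cnj_sum)
     (rule sum.swap)

lemma cadj_cadj[simp]: "cadj (cadj M) = M"
  by (simp add: cadj_def vec_eq_iff)

lemma unitaryI:
  assumes "\<And>x. U *v (cadj U *v x) = x" "\<And>x. cadj U *v (U *v x) = x"
  shows "unitary_mat (U::complex^'d^'d)"
  using assms by (simp add: unitary_mat_def matrix_eq matrix_vector_mul_assoc[symmetric])

lemma unitaryD:
  assumes "unitary_mat (U::complex^'d^'d)"
  shows "U *v (cadj U *v x) = x" "cadj U *v (U *v x) = x"
  using assms by (simp_all add: unitary_mat_def matrix_vector_mul_assoc)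

lemma unitary_cinner:
  assumes "unitary_mat (U::complex^'d^'d)"
  shows "cinner (U *v x) (U *v y) = cinner x y"
  by (simp add: cinner_adj unitaryD[OF assms])

lemma unitary_adj_cinner:
  assumes "unitary_mat (U::complex^'d^'d)"
  shows "cinner (cadj U *v x) (cadj U *v y) = cinner x y"
  by (metis cinner_adj unitaryD(1)[OF assms])

lemma unitary_norm:
  assumes "unitary_mat (U::complex^'d^'d)"
  shows "norm (cadj U *v x) = norm x"
proof -
  have "(norm (cadj U *v x))^2 = (norm x)^2"
    using unitary_adj_cinner[OF assms, of x x] unfolding cinner_self of_real_eq_iff .
  then show ?thesis by (simp add: power2_eq_iff_nonneg)
qed



section \<open>Analytic tools\<close>

lemma one_islimpt_sphere: "(1::complex) islimpt sphere 0 1"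
proof (rule connected_imp_perfect)
  show "connected (sphere (0::complex) 1)" by (rule connected_sphere) simp
  show "(1::complex) \<in> sphere 0 1" by simp
  fix x :: complex show "sphere 0 1 \<noteq> {x}"
  proof
    assume a: "sphere 0 1 = {x}"
    have "(1::complex) \<in> {x}" unfolding a[symmetric] by simp
    moreover have "(-1::complex) \<in> {x}" unfolding a[symmetric] by simp
    ultimately show False by simp
  qed
qed

lemma id_circle:
  assumes hol: "\<psi> holomorphic_on ball 0 R" and R: "1 < R"
    and circ: "\<And>\<zeta>. cmod \<zeta> = 1 \<Longrightarrow> \<psi> \<zeta> = 0" and z: "\<zeta> \<in> ball 0 R"
  shows "\<psi> \<zeta> = 0"
proof (rule analytic_continuation[OF hol open_ball connected_ball _ _ one_islimpt_sphere])
  show "sphere 0 1 \<subseteq> ball (0::complex) R" using R by auto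
  show "(1::complex) \<in> ball 0 R" using R by simp
  show "\<And>z. z \<in> sphere 0 1 \<Longrightarrow> \<psi> z = 0" using circ by simp
  show "\<zeta> \<in> ball 0 R" by fact
qed

lemma weight0:
  assumes hol: "g holomorphic_on ball 0 r"
    and inv: "\<And>\<omega> \<mu>. cmod \<omega> = 1 \<Longrightarrow> \<mu> \<in> ball 0 r \<Longrightarrow> g (\<omega> * \<mu>) = g \<mu>"
    and mu: "\<mu> \<in> ball 0 r"
  shows "g \<mu> = g 0"
proof (cases "\<mu> = 0")
  case True then show ?thesis by simp
next
  case False
  define R where "R = r / cmod \<mu>"
  have mr: "cmod \<mu> < r" using mu by simp
  have R1: "1 < R" using mr False by (simp add: R_def)
  have sub: "(\<lambda>\<zeta>. \<zeta> * \<mu>) ` ball 0 R \<subseteq> ball 0 r"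
  proof
    fix y assume "y \<in> (\<lambda>\<zeta>. \<zeta> * \<mu>) ` ball 0 R"
    then obtain \<zeta> where y0: "y = \<zeta> * \<mu>" "\<zeta> \<in> ball 0 R" by blast
    then have y: "y = \<zeta> * \<mu>" "cmod \<zeta> < R" by auto
    have "cmod y = cmod \<zeta> * cmod \<mu>" by (simp add: y norm_mult)
    also have "\<dots> < R * cmod \<mu>" using y(2) False by simp
    also have "\<dots> = r" using False by (simp add: R_def)
    finally show "y \<in> ball 0 r" by simp
  qed
  have "(\<lambda>\<zeta>. \<zeta> * \<mu>) holomorphic_on ball 0 R" by (intro holomorphic_intros)
  from holomorphic_on_compose_gen[OF this hol sub]
  have "(\<lambda>\<zeta>. g (\<zeta> * \<mu>)) holomorphic_on ball 0 R" by (simp add: o_def)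
  then have hol2: "(\<lambda>\<zeta>. g (\<zeta> * \<mu>) - g \<mu>) holomorphic_on ball 0 R"
    by (intro holomorphic_on_diff holomorphic_on_const)
  have "g (0 * \<mu>) - g \<mu> = 0"
  proof (rule id_circle[OF hol2 R1])
    fix \<zeta> :: complex assume "cmod \<zeta> = 1"
    then show "g (\<zeta> * \<mu>) - g \<mu> = 0" using inv mu by simp
  next
    show "0 \<in> ball (0::complex) R" using R1 by simp
  qed
  then show ?thesis by simp
qed

lemma cnj_mult_self_unit: "cmod \<omega> = 1 \<Longrightarrow> cnj \<omega> * \<omega> = 1"
  by (metis complex_norm_square mult.commute of_real_1 power_one)

lemma weight_m1:
  assumes hol: "g holomorphic_on ball 0 r"
    and inv: "\<And>\<omega> \<mu>. cmod \<omega> = 1 \<Longrightarrow> \<mu> \<in> ball 0 r \<Longrightarrow> g (\<omega> * \<mu>) = cnj \<omega> * g \<mu>"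
    and mu: "\<mu> \<in> ball 0 r"
  shows "g \<mu> = 0"
proof (cases "\<mu> = 0")
  case True
  have "g (-1 * 0) = cnj (-1) * g 0" using inv[of "-1" 0] mu True by simp
  then show ?thesis using True by simp
next
  case False
  have "(\<lambda>x. x * g x) \<mu> = (\<lambda>x. x * g x) 0"
  proof (rule weight0[where r=r])
    show "(\<lambda>x. x * g x) holomorphic_on ball 0 r" by (intro holomorphic_intros hol)
    fix \<omega> \<nu> :: complex assume "cmod \<omega> = 1" "\<nu> \<in> ball 0 r"
    then have "g (\<omega> * \<nu>) = cnj \<omega> * g \<nu>" using inv by blast
    then have "\<omega> * \<nu> * g (\<omega> * \<nu>) = (cnj \<omega> * \<omega>) * (\<nu> * g \<nu>)" by (simp add: mult_ac)
    then show "\<omega> * \<nu> * g (\<omega> * \<nu>) = \<nu> * g \<nu>"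
      using cnj_mult_self_unit[OF \<open>cmod \<omega> = 1\<close>] by simp
  qed (use mu in auto)
  then show ?thesis using False by simp
qed

lemma bl_line: "bounded_linear (\<lambda>h::complex. h *s (b::complex^'d))"
proof (rule bounded_linear_intro[where K="norm b"])
  show "\<And>x y. (x + y) *s b = x *s b + y *s b" by (simp add: vec_eq_iff algebra_simps)
  show "\<And>r x. (r *\<^sub>R x) *s b = r *\<^sub>R (x *s b)"
    by (simp add: vec_eq_iff)
  show "\<And>x. norm (x *s b) \<le> norm x * norm b" by (simp add: norm_vsmult)
qed

lemma holo_line:
  assumes F: "holo_on (ball 0 1) F" and S: "open S"
    and inS: "\<And>t. t \<in> S \<Longrightarrow> a + t *s b \<in> ball 0 1"
  shows "(\<lambda>t. F (a + t *s b)) holomorphic_on S"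
  unfolding holomorphic_on_open[OF S]
proof
  fix t assume "t \<in> S"
  then obtain F' where F': "(F has_derivative F') (at (a + t *s b))" "\<And>c v. F' (c *s v) = c * F' v"
    using F inS unfolding holo_on_def by blast
  have L: "((\<lambda>t. a + t *s b) has_derivative (\<lambda>h. 0 + h *s b)) (at t)"
    by (intro has_derivative_add has_derivative_const bounded_linear_imp_has_derivative bl_line)
  have "((\<lambda>t. F (a + t *s b)) has_derivative (\<lambda>h. F' (0 + h *s b))) (at t)"
    by (rule has_derivative_compose[OF L F'(1)])
  moreover have "(\<lambda>h. F' (0 + h *s b)) = (*) (F' b)"
    using F'(2) by (auto simp: mult.commute)
  ultimately show "\<exists>f'. ((\<lambda>t. F (a + t *s b)) has_field_derivative f') (at t)"
    unfolding has_field_derivative_def by auto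
qed

lemma cnj_ball: "cnj ` ball (0::complex) R = ball 0 R"
proof -
  have "x \<in> cnj ` ball 0 R" if "x \<in> ball 0 R" for x
    using that by (intro image_eqI[of _ _ "cnj x"]) auto
  then show ?thesis by auto
qed

lemma holo_line_cnj:
  assumes G: "holo_on (ball 0 1) (\<lambda>w. cnj (G w))"
    and inS: "\<And>\<zeta>. \<zeta> \<in> ball 0 R \<Longrightarrow> a + cnj \<zeta> *s b \<in> ball 0 1"
  shows "(\<lambda>\<zeta>. G (a + cnj \<zeta> *s b)) holomorphic_on ball 0 R"
proof -
  have "(\<lambda>t. cnj (G (a + t *s b))) holomorphic_on ball 0 R"
    by (rule holo_line[OF G open_ball]) (metis inS cnj_ball complex_cnj_cnj imageI)
  then have "(\<lambda>t. cnj (G (a + t *s b))) holomorphic_on cnj ` ball 0 R" by (simp add: cnj_ball)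
  from holomorphic_on_compose_cnj_cnj[OF this open_ball]
  show ?thesis by (simp add: o_def)
qed

lemma holo_cinner:
  fixes M :: "complex \<Rightarrow> complex^'d^'d"
  assumes "\<And>i j. (\<lambda>t. M t $ i $ j) holomorphic_on S"
  shows "(\<lambda>t. cinner (M t *v y) x) holomorphic_on S"
  unfolding cinner_def matrix_vector_mult_def vec_lambda_beta
  by (intro holomorphic_intros assms)


lemma vsmult_add_left: "(a + b) *s (x::complex^'d) = a *s x + b *s x"
  by (simp add: vec_eq_iff algebra_simps)
lemma vsmult_assoc: "a *s (b *s (x::complex^'d)) = (a * b) *s x"
  by (simp add: vec_eq_iff)
lemma vsmult_one[simp]: "1 *s (x::complex^'d) = x"
  by (simp add: vec_eq_iff)
lemma vsmult_zero[simp]: "0 *s (x::complex^'d) = 0" "c *s (0::complex^'d) = 0"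
  by (simp_all add: vec_eq_iff)
lemma vsmult_add_right: "c *s (x + y) = c *s x + c *s (y::complex^'d)"
  by (simp add: vec_eq_iff algebra_simps)
lemma vsmult_diff_right: "c *s (x - y) = c *s x - c *s (y::complex^'d)"
  by (simp add: vec_eq_iff algebra_simps)
lemma vsmult_comp[simp]: "(c *s (x::complex^'d)) $ i = c * x $ i"
  by simp

lemma mat1_mv[simp]: "mat 1 *v x = (x::complex^'d)"
  by (rule matrix_vector_mul_lid)

lemma col_entry: "(M *v axis j 1) $ i = (M::complex^'d^'d) $ i $ j"
proof -
  have "(M *v axis j 1) $ i = (\<Sum>k\<in>UNIV. if k = j then M $ i $ k else 0)"
    unfolding matrix_vector_mult_def vec_lambda_beta by (rule sum.cong) (auto simp: axis_def)
  then show ?thesis by simp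
qed

lemma entry_cinner: "(M::complex^'d^'d) $ i $ j = cinner (M *v axis j 1) (axis i 1)"
  by (simp add: cinner_axis_right col_entry)

lemma norm_axis1: "norm (axis i (1::complex) :: complex^'d) = 1"
proof -
  have "cinner (axis i 1) (axis i (1::complex) :: complex^'d) = 1"
    unfolding cinner_axis_right by simp
  then have "(norm (axis i (1::complex) :: complex^'d))^2 = 1"
    by (simp add: cinner_self)
  then show ?thesis by (simp add: power2_eq_iff_nonneg)
qed

definition rotm :: "complex \<Rightarrow> complex^'d \<Rightarrow> complex^'d^'d" where
  "rotm \<omega> v = mat 1 + cscale (\<omega> - 1) (outer v v)"

lemma rotm_mv: "rotm \<omega> v *v x = x + ((\<omega> - 1) * cinner x v) *s v"
  by (simp add: rotm_def mv_add mv_cscale mv_outer vsmult_assoc)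

lemma cadj_rotm: "cadj (rotm \<omega> v) = rotm (cnj \<omega>) v"
  by (simp add: rotm_def cadj_def cscale_def outer_def mat_def vec_eq_iff)

lemma rotm_inv:
  assumes "cmod \<omega> = 1" "cinner v v = 1"
  shows "rotm \<omega> v *v (rotm (cnj \<omega>) v *v x) = x"
proof -
  have cw: "\<omega> * cnj \<omega> = 1" using cnj_mult_self_unit[OF assms(1)] by (simp add: mult.commute)
  have "rotm \<omega> v *v (rotm (cnj \<omega>) v *v x)
     = x + (((cnj \<omega> - 1) + (\<omega> - 1) * (1 + (cnj \<omega> - 1) * cinner v v)) * cinner x v) *s v"
    by (simp add: rotm_mv vec_eq_iff cinner_add_left cinner_scale_left algebra_simps)
  also have "((cnj \<omega> - 1) + (\<omega> - 1) * (1 + (cnj \<omega> - 1) * cinner v v)) = \<omega> * cnj \<omega> - 1"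
    using assms(2) by (simp add: algebra_simps)
  finally show ?thesis by (simp only: cw) simp
qed

lemma rotm_unitary:
  assumes "cmod \<omega> = 1" "cinner v v = 1"
  shows "unitary_mat (rotm \<omega> v)"
proof (rule unitaryI)
  show "\<And>x. rotm \<omega> v *v (cadj (rotm \<omega> v) *v x) = x"
    using rotm_inv[OF assms] by (simp add: cadj_rotm)
  have "cmod (cnj \<omega>) = 1" using assms(1) by simp
  from rotm_inv[OF this assms(2)]
  show "\<And>x. cadj (rotm \<omega> v) *v (rotm \<omega> v *v x) = x"
    by (simp add: cadj_rotm)
qed

lemma rotm_perp: "cinner y v = 0 \<Longrightarrow> rotm \<omega> v *v y = y"
  by (simp add: rotm_mv)

lemma rotm_self: "cinner v v = 1 \<Longrightarrow> rotm \<omega> v *v v = \<omega> *s v"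
  by (simp add: rotm_mv vsmult_add_left)

definition phm :: "complex \<Rightarrow> complex^'d^'d" where
  "phm \<omega> = cscale \<omega> (mat 1)"

lemma phm_mv: "phm \<omega> *v x = \<omega> *s x"
  by (simp add: phm_def mv_cscale)

lemma cadj_phm: "cadj (phm \<omega>) = phm (cnj \<omega>)"
  by (simp add: phm_def cadj_def cscale_def mat_def vec_eq_iff)

lemma phm_unitary:
  assumes "cmod \<omega> = 1"
  shows "unitary_mat (phm \<omega>)"
proof (rule unitaryI)
  have a: "cnj \<omega> * \<omega> = 1" by (rule cnj_mult_self_unit[OF assms])
  show "\<And>x. phm \<omega> *v (cadj (phm \<omega>) *v x) = x"
    using a by (simp add: cadj_phm phm_mv vsmult_assoc mult.commute)
  show "\<And>x. cadj (phm \<omega>) *v (phm \<omega> *v x) = x"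
    using a by (simp add: cadj_phm phm_mv vsmult_assoc)
qed

lemma in_ball_iff: "(x::complex^'d) \<in> ball 0 1 \<longleftrightarrow> norm x < 1"
  by simp

lemma cinner_eq0_sym: "cinner x y = 0 \<longleftrightarrow> cinner y x = 0"
  by (metis cinner_cnj complex_cnj_zero_iff)

lemma norm_perp_sum:
  assumes "cinner z0 v = 0" "cinner v v = 1"
  shows "(norm (z0 + t *s v))^2 = (norm z0)^2 + (cmod t)^2"
proof -
  have "cinner (z0 + t *s v) (z0 + t *s v) = cinner z0 z0 + t * cnj t"
    using assms cinner_eq0_sym[of z0 v]
    by (simp add: cinner_add_left cinner_add_right cinner_scale_left cinner_scale_right)
  then have "complex_of_real ((norm (z0 + t *s v))^2) = complex_of_real ((norm z0)^2) + complex_of_real ((cmod t)^2)"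
    by (simp only: cinner_self[symmetric] complex_norm_square)
  then show ?thesis by (simp only: of_real_add[symmetric] of_real_eq_iff)
qed


lemma vsmult_eq0: "c *s (x::complex^'d) = 0 \<Longrightarrow> x \<noteq> 0 \<Longrightarrow> c = 0"
  by (auto simp: vec_eq_iff)

lemma common_eig:
  fixes M :: "complex^'d^'d"
  assumes P_add: "\<And>x y. P x \<Longrightarrow> P y \<Longrightarrow> P (x + y)"
    and eig: "\<And>x. P x \<Longrightarrow> \<exists>c. M *v x = c *s x"
    and P0: "P x0" and x0: "x0 \<noteq> 0" and c0: "M *v x0 = c0 *s x0" and Px: "P x"
  shows "M *v x = c0 *s x"
proof -
  obtain l where l: "M *v x = l *s x" using eig Px by blast
  obtain m where m: "M *v (x + x0) = m *s (x + x0)" using eig P_add[OF Px P0] by blast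
  have e: "(l - m) *s x = (m - c0) *s x0"
    using m l c0 by (simp add: mv_vadd vec_eq_iff algebra_simps)
  show ?thesis
  proof (cases "l = m")
    case True
    then have "(m - c0) *s x0 = 0" using e by simp
    then have "m - c0 = 0" using x0 by (rule vsmult_eq0)
    then have "m = c0" by simp
    then show ?thesis using l True by simp
  next
    case False
    then have "x = ((m - c0) / (l - m)) *s x0"
      using e by (simp add: vec_eq_iff field_simps)
    then show ?thesis using c0 by (simp add: mv_vscale vsmult_assoc mult.commute)
  qed
qed

locale kern =
  fixes K :: "complex^'d \<Rightarrow> complex^'d \<Rightarrow> complex^'d^'d"
  assumes sa: "sesqui_analytic K" and herm: "hermitian_kernel K" and qi: "quasi_invariant_id K"
begin

lemma inv_mv:
  assumes "unitary_mat U" "z \<in> ball 0 1" "w \<in> ball 0 1"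
  shows "K z w *v x = U *v (K (cadj U *v z) (cadj U *v w) *v (cadj U *v x))"
proof -
  have "U ** K (cadj U *v z) (cadj U *v w) ** cadj U = K z w"
    using qi assms unfolding quasi_invariant_id_def by blast
  then show ?thesis by (metis matrix_vector_mul_assoc)
qed

lemma norm_unit_smult: "cmod \<omega> = 1 \<Longrightarrow> norm (\<omega> *s (z::complex^'d)) = norm z"
  by (simp add: norm_vsmult)

lemma phase_inv:
  assumes om: "cmod \<omega> = 1" and z: "z \<in> ball 0 1" and w: "w \<in> ball 0 1"
  shows "K (\<omega> *s z) (\<omega> *s w) = K z w"
proof -
  have om': "cmod (cnj \<omega>) = 1" using om by simp
  have u: "unitary_mat (phm (cnj \<omega>))" by (rule phm_unitary[OF om'])
  have a: "\<omega> * cnj \<omega> = 1" using cnj_mult_self_unit[OF om] by (simp add: mult.commute)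
  have "K z w *v x = K (\<omega> *s z) (\<omega> *s w) *v x" for x
    using inv_mv[OF u z w, of x] a by (simp add: cadj_phm phm_mv mv_vscale vsmult_assoc)
  then show ?thesis by (simp add: matrix_eq)
qed

lemma holo_z: "w \<in> ball 0 1 \<Longrightarrow> holo_on (ball 0 1) (\<lambda>z. K z w $ i $ j)"
  using sa unfolding sesqui_analytic_def by blast

lemma holo_w: "z \<in> ball 0 1 \<Longrightarrow> holo_on (ball 0 1) (\<lambda>w. cnj (K z w $ i $ j))"
  using sa unfolding sesqui_analytic_def by blast

lemma Kline_entry_holo:
  assumes w: "w \<in> ball 0 1" and S: "open S" and inS: "\<And>t. t \<in> S \<Longrightarrow> a + t *s b \<in> ball 0 1"
  shows "(\<lambda>t. K (a + t *s b) w $ i $ j) holomorphic_on S"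
  by (rule holo_line[OF holo_z[OF w] S inS])

lemma Kline_holo:
  assumes w: "w \<in> ball 0 1" and S: "open S" and inS: "\<And>t. t \<in> S \<Longrightarrow> a + t *s b \<in> ball 0 1"
  shows "(\<lambda>t. cinner (K (a + t *s b) w *v y) x) holomorphic_on S"
  by (rule holo_cinner, rule Kline_entry_holo[OF w S inS])

lemma transfer:
  assumes z: "z \<in> ball 0 1" and w: "w \<in> ball 0 1"
    and zz: "\<zeta> *s z \<in> ball 0 1" and zw: "\<zeta> *s w \<in> ball 0 1"
  shows "K (\<zeta> *s z) w = K z (cnj \<zeta> *s w)"
proof (cases "z = 0 \<and> w = 0")
  case True then show ?thesis by simp
next
  case False
  define m where "m = max (norm z) (norm w)"
  have m0: "0 < m" using False by (auto simp: m_def less_max_iff_disj)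
  have m1: "m < 1" using z w by (simp add: m_def)
  define R where "R = 1 / m"
  have R1: "1 < R" using m0 m1 by (simp add: R_def)
  have Rm: "R * m = 1" using m0 by (simp add: R_def)
  have nz: "norm z \<le> m" "norm w \<le> m" by (simp_all add: m_def)
  have inz: "0 + t *s z \<in> ball 0 1" if "t \<in> ball 0 R" for t
  proof -
    have "norm (t *s z) = cmod t * norm z" by (simp add: norm_vsmult)
    also have "\<dots> \<le> cmod t * m" using nz by (simp add: mult_left_mono)
    also have "\<dots> < R * m" using that m0 by simp
    finally show ?thesis using Rm by simp
  qed
  have inw: "0 + cnj t *s w \<in> ball 0 1" if "t \<in> ball 0 R" for t
  proof -
    have "norm (cnj t *s w) = cmod t * norm w" by (simp add: norm_vsmult)
    also have "\<dots> \<le> cmod t * m" using nz by (simp add: mult_left_mono)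
    also have "\<dots> < R * m" using that m0 by simp
    finally show ?thesis using Rm by simp
  qed
  have zR: "\<zeta> \<in> ball 0 R"
  proof -
    have "cmod \<zeta> * norm z < 1" "cmod \<zeta> * norm w < 1" using zz zw by (simp_all add: norm_vsmult)
    then have "cmod \<zeta> * m < 1" by (simp add: m_def max_def)
    then have "cmod \<zeta> < R" using m0 by (simp add: R_def field_simps)
    then show ?thesis by simp
  qed
  have "K (\<zeta> *s z) w $ i $ j = K z (cnj \<zeta> *s w) $ i $ j" for i j
  proof -
    have h1: "(\<lambda>t. K (0 + t *s z) w $ i $ j) holomorphic_on ball 0 R"
      by (rule Kline_entry_holo[OF w open_ball inz])
    have h2: "(\<lambda>t. K z (0 + cnj t *s w) $ i $ j) holomorphic_on ball 0 R"
      by (rule holo_line_cnj[where G="\<lambda>w. K z w $ i $ j", OF holo_w[OF z] inw])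
    have "(\<lambda>t. K (0 + t *s z) w $ i $ j - K z (0 + cnj t *s w) $ i $ j) \<zeta> = 0"
    proof (rule id_circle[OF holomorphic_on_diff[OF h1 h2] R1 _ zR])
      fix t :: complex assume t: "cmod t = 1"
      have tz: "t *s z \<in> ball 0 1" using inz[of t] t R1 by simp
      have a: "cnj t * t = 1" by (rule cnj_mult_self_unit[OF t])
      have "K (cnj t *s (t *s z)) (cnj t *s w) = K (t *s z) w"
        by (rule phase_inv) (use t tz w in auto)
      then show "K (0 + t *s z) w $ i $ j - K z (0 + cnj t *s w) $ i $ j = 0"
        using a by (simp add: vsmult_assoc)
    qed
    then show ?thesis by simp
  qed
  then show ?thesis by (simp add: vec_eq_iff)
qed

end


context kern
begin

lemma perp_ball:
  assumes z0v: "cinner z0 v = 0" and v: "cinner v v = 1" and z0: "z0 \<in> ball 0 1"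
  shows "z0 + t *s v \<in> ball 0 1 \<longleftrightarrow> t \<in> ball 0 (sqrt (1 - (norm z0)^2))"
proof -
  have n: "(norm (z0 + t *s v))^2 = (norm z0)^2 + (cmod t)^2" by (rule norm_perp_sum[OF z0v v])
  have nz: "(norm z0)^2 < 1" using z0 by (simp add: abs_square_less_1)
  have "z0 + t *s v \<in> ball 0 1 \<longleftrightarrow> (norm (z0 + t *s v))^2 < 1"
    by (simp add: abs_square_less_1)
  also have "\<dots> \<longleftrightarrow> (cmod t)^2 < 1 - (norm z0)^2" by (subst n) arith
  also have "\<dots> \<longleftrightarrow> cmod t < sqrt (1 - (norm z0)^2)"
  proof
    assume "(cmod t)^2 < 1 - (norm z0)^2" then show "cmod t < sqrt (1 - (norm z0)^2)"
      by (rule real_less_rsqrt)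
  next
    assume a: "cmod t < sqrt (1 - (norm z0)^2)"
    have "(cmod t)^2 < (sqrt (1 - (norm z0)^2))^2"
      by (rule power_strict_mono[OF a]) auto
    then show "(cmod t)^2 < 1 - (norm z0)^2" using nz by simp
  qed
  finally show ?thesis by simp
qed

lemma rot_K:
  assumes v: "cinner v v = 1" and wv: "cinner w v = 0" and w: "w \<in> ball 0 1"
    and z0v: "cinner z0 v = 0" and z0: "z0 \<in> ball 0 1" and zin: "z0 + t *s v \<in> ball 0 1"
    and om: "cmod \<omega> = 1"
  shows "cinner (K (z0 + (\<omega> * t) *s v) w *v y) x
       = cinner (K (z0 + t *s v) w *v (rotm (cnj \<omega>) v *v y)) (rotm (cnj \<omega>) v *v x)"
proof -
  have zin2: "z0 + (\<omega> * t) *s v \<in> ball 0 1"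
    using zin perp_ball[OF z0v v z0] om by (simp add: norm_mult)
  have u: "unitary_mat (rotm \<omega> v)" by (rule rotm_unitary[OF om v])
  have a: "cnj \<omega> * \<omega> = 1" by (rule cnj_mult_self_unit[OF om])
  have cz: "rotm (cnj \<omega>) v *v (z0 + (\<omega> * t) *s v) = z0 + t *s v"
  proof -
    have "rotm (cnj \<omega>) v *v (z0 + (\<omega> * t) *s v)
        = z0 + ((\<omega> * t) + (cnj \<omega> - 1) * (\<omega> * t)) *s v"
      using z0v v by (simp add: rotm_mv cinner_add_left cinner_scale_left vec_eq_iff algebra_simps)
    also have "(\<omega> * t) + (cnj \<omega> - 1) * (\<omega> * t) = (cnj \<omega> * \<omega>) * t" by (simp add: algebra_simps)
    finally show ?thesis using a by simp
  qed
  have cw: "rotm (cnj \<omega>) v *v w = w" by (rule rotm_perp[OF wv])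
  show ?thesis
    using inv_mv[OF u zin2 w, of y]
    by (simp add: cadj_rotm cz cw cinner_adj)
qed

lemma wl_hol:
  assumes v: "cinner v v = 1" and w: "w \<in> ball 0 1"
    and z0v: "cinner z0 v = 0" and z0: "z0 \<in> ball 0 1"
  shows "(\<lambda>t. cinner (K (z0 + t *s v) w *v y) x) holomorphic_on ball 0 (sqrt (1 - (norm z0)^2))"
  by (rule Kline_holo[OF w open_ball]) (use perp_ball[OF z0v v z0] in blast)

lemma wlA:
  assumes v: "cinner v v = 1" and wv: "cinner w v = 0" and w: "w \<in> ball 0 1"
    and z0v: "cinner z0 v = 0" and z0: "z0 \<in> ball 0 1" and zin: "z0 + t *s v \<in> ball 0 1"
    and xv: "cinner x v = 0" and yv: "cinner y v = 0"
  shows "cinner (K (z0 + t *s v) w *v y) x = cinner (K z0 w *v y) x"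
proof -
  have "(\<lambda>t. cinner (K (z0 + t *s v) w *v y) x) t = (\<lambda>t. cinner (K (z0 + t *s v) w *v y) x) 0"
  proof (rule weight0[OF wl_hol[OF v w z0v z0]])
    fix \<omega> \<mu> :: complex assume om: "cmod \<omega> = 1" and mu: "\<mu> \<in> ball 0 (sqrt (1 - (norm z0)^2))"
    have "\<mu> \<in> ball 0 (sqrt (1 - (norm z0)^2))" by fact
    then have zin': "z0 + \<mu> *s v \<in> ball 0 1" using perp_ball[OF z0v v z0] by blast
    show "cinner (K (z0 + (\<omega> * \<mu>) *s v) w *v y) x = cinner (K (z0 + \<mu> *s v) w *v y) x"
      using rot_K[OF v wv w z0v z0 zin' om] rotm_perp[OF xv] rotm_perp[OF yv] by simp
  next
    show "t \<in> ball 0 (sqrt (1 - (norm z0)^2))" using zin perp_ball[OF z0v v z0] by blast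
  qed
  then show ?thesis by simp
qed

lemma wlB:
  assumes v: "cinner v v = 1" and wv: "cinner w v = 0" and w: "w \<in> ball 0 1"
    and z0v: "cinner z0 v = 0" and z0: "z0 \<in> ball 0 1" and zin: "z0 + t *s v \<in> ball 0 1"
  shows "cinner (K (z0 + t *s v) w *v v) v = cinner (K z0 w *v v) v"
proof -
  have "(\<lambda>t. cinner (K (z0 + t *s v) w *v v) v) t = (\<lambda>t. cinner (K (z0 + t *s v) w *v v) v) 0"
  proof (rule weight0[OF wl_hol[OF v w z0v z0]])
    fix \<omega> \<mu> :: complex assume om: "cmod \<omega> = 1" and mu: "\<mu> \<in> ball 0 (sqrt (1 - (norm z0)^2))"
    then have zin': "z0 + \<mu> *s v \<in> ball 0 1" using perp_ball[OF z0v v z0] by blast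
    have a: "cnj \<omega> * \<omega> = 1" by (rule cnj_mult_self_unit[OF om])
    show "cinner (K (z0 + (\<omega> * \<mu>) *s v) w *v v) v = cinner (K (z0 + \<mu> *s v) w *v v) v"
      using rot_K[OF v wv w z0v z0 zin' om] rotm_self[OF v] a
        cnj_mult_self_unit[OF om, unfolded mult.commute[of "cnj \<omega>"]]
      by (simp add: mv_vscale cinner_scale_left cinner_scale_right mult.assoc[symmetric])
  next
    show "t \<in> ball 0 (sqrt (1 - (norm z0)^2))" using zin perp_ball[OF z0v v z0] by blast
  qed
  then show ?thesis by simp
qed

lemma wlC:
  assumes v: "cinner v v = 1" and wv: "cinner w v = 0" and w: "w \<in> ball 0 1"
    and z0v: "cinner z0 v = 0" and z0: "z0 \<in> ball 0 1" and zin: "z0 + t *s v \<in> ball 0 1"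
    and xv: "cinner x v = 0"
  shows "cinner (K (z0 + t *s v) w *v v) x = 0"
proof -
  have "(\<lambda>t. cinner (K (z0 + t *s v) w *v v) x) t = 0"
  proof (rule weight_m1[OF wl_hol[OF v w z0v z0]])
    fix \<omega> \<mu> :: complex assume om: "cmod \<omega> = 1" and mu: "\<mu> \<in> ball 0 (sqrt (1 - (norm z0)^2))"
    then have zin': "z0 + \<mu> *s v \<in> ball 0 1" using perp_ball[OF z0v v z0] by blast
    show "cinner (K (z0 + (\<omega> * \<mu>) *s v) w *v v) x = cnj \<omega> * cinner (K (z0 + \<mu> *s v) w *v v) x"
      using rot_K[OF v wv w z0v z0 zin' om] rotm_self[OF v] rotm_perp[OF xv]
      by (simp add: mv_vscale cinner_scale_left)
  next
    show "t \<in> ball 0 (sqrt (1 - (norm z0)^2))" using zin perp_ball[OF z0v v z0] by blast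
  qed
  then show ?thesis by simp
qed

lemma perp_decomp:
  assumes v: "cinner v v = 1"
  shows "cinner (z - cinner z v *s v) v = 0" "z = (z - cinner z v *s v) + cinner z v *s v"
  using v by (simp_all add: cinner_diff_left cinner_scale_left)

lemma perp_decomp_ball:
  assumes v: "cinner v v = 1" and z: "z \<in> ball 0 1"
  shows "z - cinner z v *s v \<in> ball 0 1"
proof -
  have e: "(norm ((z - cinner z v *s v) + cinner z v *s v))^2 = (norm (z - cinner z v *s v))^2 + (cmod (cinner z v))^2"
    by (rule norm_perp_sum[OF perp_decomp(1)[OF v] v])
  have "(z - cinner z v *s v) + cinner z v *s v = z" by simp
  then have "(norm z)^2 = (norm (z - cinner z v *s v))^2 + (cmod (cinner z v))^2"
    using e by (simp only:)
  then have "(norm (z - cinner z v *s v))^2 \<le> (norm z)^2" by simp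
  then have "norm (z - cinner z v *s v) \<le> norm z" by (simp add: power2_le_iff_abs_le)
  then show ?thesis using z by simp
qed

lemma eig:
  assumes v: "cinner v v = 1" and wv: "cinner w v = 0" and w: "w \<in> ball 0 1" and z: "z \<in> ball 0 1"
  shows "K z w *v v = cinner (K z w *v v) v *s v"
proof -
  define c where "c = cinner (K z w *v v) v"
  define r where "r = K z w *v v - c *s v"
  define z0 where "z0 = z - cinner z v *s v"
  have z0v: "cinner z0 v = 0" and zz: "z = z0 + cinner z v *s v"
    using perp_decomp[OF v] by (simp_all add: z0_def)
  have z0: "z0 \<in> ball 0 1" using perp_decomp_ball[OF v z] by (simp add: z0_def)
  have rv: "cinner r v = 0" by (simp add: r_def c_def cinner_diff_left cinner_scale_left v)
  have "cinner (K (z0 + cinner z v *s v) w *v v) r = 0"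
    by (rule wlC[OF v wv w z0v z0 _ rv]) (use z zz in simp)
  then have "cinner (K z w *v v) r = 0" using zz by simp
  then have "cinner r r = 0"
    using rv cinner_eq0_sym[of r v] by (simp add: r_def cinner_diff_left cinner_scale_left)
  then have "r = 0" by (simp add: cinner_self_eq_0)
  then show ?thesis by (simp add: r_def c_def)
qed

lemma eig2:
  assumes xw: "cinner x w = 0" and w: "w \<in> ball 0 1" and z: "z \<in> ball 0 1"
  shows "\<exists>c. K z w *v x = c *s x"
proof (cases "x = 0")
  case True then show ?thesis by (auto simp: vec_eq_iff matrix_vector_mult_def)
next
  case False
  define n where "n = norm x"
  have n0: "n > 0" using False by (simp add: n_def)
  define v where "v = complex_of_real (1 / n) *s x"
  have xv: "x = complex_of_real n *s v" using n0 by (simp add: v_def vsmult_assoc)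
  have xx: "cinner x x = complex_of_real (n^2)" by (simp add: cinner_self n_def)
  have v: "cinner v v = 1" using n0
    by (simp add: v_def cinner_scale_left cinner_scale_right xx power2_eq_square)
  have wv: "cinner w v = 0"
    using xw cinner_eq0_sym[of x w] by (simp add: v_def cinner_scale_right)
  define c where "c = cinner (K z w *v v) v"
  have kv: "K z w *v v = c *s v" using eig[OF v wv w z] by (simp add: c_def)
  have "K z w *v x = c *s x"
    by (simp add: xv kv mv_vscale vsmult_assoc mult.commute)
  then show ?thesis by blast
qed

end


definition rho :: "complex \<Rightarrow> real" where "rho t = (1 + cmod t) / 2"

lemma rho_props: "cmod t < 1 \<Longrightarrow> cmod t < rho t \<and> rho t < 1 \<and> 0 < rho t"
  by (simp add: rho_def add_pos_nonneg)

lemma norm_e1smult: "norm (c *s (axis i 1 :: complex^'d)) = cmod c"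
  by (simp add: norm_vsmult norm_axis1)

lemma e1_ball: "c *s (axis i 1 :: complex^'d) \<in> ball 0 1 \<longleftrightarrow> cmod c < 1"
  by (simp add: norm_e1smult)

lemma cinner_e1e1: "cinner (axis i 1) (axis i 1 :: complex^'d) = 1"
  by (simp add: cinner_axis_right)

lemma zero_by_cont:
  fixes \<phi> :: "complex \<Rightarrow> complex"
  assumes c: "isCont \<phi> 0" and d: "0 < \<delta>" and z: "\<And>e. e \<noteq> 0 \<Longrightarrow> cmod e < \<delta> \<Longrightarrow> \<phi> e = 0"
  shows "\<phi> 0 = 0"
proof -
  have "(\<phi> \<longlongrightarrow> \<phi> 0) (at 0)" using c by (simp add: isCont_def)
  moreover have "eventually (\<lambda>e. \<phi> e = 0) (at (0::complex))"
    unfolding eventually_at using d z by (auto simp: dist_norm)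
  then have "(\<phi> \<longlongrightarrow> 0) (at 0)" by (rule tendsto_eventually)
  ultimately show ?thesis by (rule tendsto_unique[OF at_neq_bot])
qed

context kern
begin

definition Kc :: "'d \<Rightarrow> complex \<Rightarrow> complex^'d^'d" where
  "Kc i0 t = K ((t / complex_of_real (rho t)) *s axis i0 1) (complex_of_real (rho t) *s axis i0 1)"

lemma Kc_eq:
  assumes s: "0 < s" "s < 1" and z1: "cmod z1 < 1"
  shows "K (z1 *s axis i0 1) (complex_of_real s *s axis i0 1) = Kc i0 (complex_of_real s * z1)"
proof -
  define t where "t = complex_of_real s * z1"
  have "cmod t = s * cmod z1" using s by (simp add: t_def norm_mult)
  also have "\<dots> < 1 * 1" using s z1 by (intro mult_strict_mono) auto
  finally have t1: "cmod t < 1" by simp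
  define r where "r = rho t"
  have r: "cmod t < r" "r < 1" "0 < r" using rho_props[OF t1] by (simp_all add: r_def)
  define u where "u = (t / complex_of_real r) *s (axis i0 1 :: complex^'d)"
  define \<zeta> where "\<zeta> = complex_of_real (r / s)"
  have u: "u \<in> ball 0 1" using r by (simp add: u_def norm_e1smult norm_divide)
  have w: "complex_of_real s *s axis i0 1 \<in> ball 0 (1::real)" using s by (simp add: norm_e1smult)
  have sc1: "complex_of_real (r / s) * (complex_of_real s * z1 / complex_of_real r) = z1"
    using s r by (simp add: field_simps)
  have sc2: "complex_of_real (r / s) * complex_of_real s = complex_of_real r"
    using s by (simp add: field_simps)
  have zu: "\<zeta> *s u = z1 *s axis i0 1" unfolding \<zeta>_def u_def t_def vsmult_assoc sc1 ..
  have zw: "\<zeta> *s (complex_of_real s *s axis i0 1) = complex_of_real r *s axis i0 1"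
    unfolding \<zeta>_def vsmult_assoc sc2 ..
  have "K (\<zeta> *s u) (complex_of_real s *s axis i0 1) = K u (cnj \<zeta> *s (complex_of_real s *s axis i0 1))"
    by (rule transfer[OF u w]) (use zu zw z1 r in \<open>simp_all add: norm_e1smult\<close>)
  also have "cnj \<zeta> = \<zeta>" by (simp add: \<zeta>_def)
  finally have e: "K (\<zeta> *s u) (complex_of_real s *s axis i0 1) = K u (\<zeta> *s (complex_of_real s *s axis i0 1))" .
  have kc: "Kc i0 t = K u (complex_of_real r *s axis i0 1)" unfolding Kc_def u_def r_def ..
  show ?thesis unfolding t_def[symmetric] kc e[unfolded zu zw] ..
qed

lemma Kc_local:
  assumes r: "0 < r" "r < 1" and t: "cmod t < r"
  shows "Kc i0 t = K ((t / complex_of_real r) *s axis i0 1) (complex_of_real r *s axis i0 1)"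
proof -
  have "cmod (t / complex_of_real r) < 1" using r t by (simp add: norm_divide)
  from Kc_eq[OF r this, of i0] show ?thesis using r by simp
qed

lemma Kc_holo: "(\<lambda>t. Kc i0 t $ i $ j) holomorphic_on ball 0 1"
proof -
  have "(\<lambda>t. Kc i0 t $ i $ j) holomorphic_on (\<Union>r\<in>{0<..<1}. ball 0 r)"
  proof (rule holomorphic_on_UN_open)
    fix r :: real assume r: "r \<in> {0<..<1}"
    have w: "complex_of_real r *s axis i0 1 \<in> ball 0 (1::real)" using r by (simp add: norm_e1smult)
    have "(\<lambda>t. K (0 + t *s ((1 / complex_of_real r) *s axis i0 1)) (complex_of_real r *s axis i0 1) $ i $ j)
          holomorphic_on ball 0 r"
      by (rule Kline_entry_holo[OF w open_ball]) (use r in \<open>simp add: vsmult_assoc norm_e1smult norm_divide\<close>)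
    then show "(\<lambda>t. Kc i0 t $ i $ j) holomorphic_on ball 0 r"
      by (rule holomorphic_transform) (use r in \<open>simp add: vsmult_assoc Kc_local[of r]\<close>)
  qed simp
  moreover have "(\<Union>r\<in>{0<..<1}. ball 0 r) = ball (0::complex) 1"
  proof
    show "(\<Union>r\<in>{0<..<1}. ball 0 r) \<subseteq> ball (0::complex) 1" by auto
    show "ball (0::complex) 1 \<subseteq> (\<Union>r\<in>{0<..<1}. ball 0 r)"
    proof
      fix t :: complex assume "t \<in> ball 0 1"
      then have "cmod t < 1" by simp
      then have "rho t \<in> {0<..<1}" "t \<in> ball 0 (rho t)" using rho_props by auto
      then show "t \<in> (\<Union>r\<in>{0<..<1}. ball 0 r)" by blast
    qed
  qed
  ultimately show ?thesis by simp
qed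

lemma K0w: "w \<in> ball 0 1 \<Longrightarrow> K 0 w = K 0 0"
  using transfer[of 0 w 0] by simp

lemma Kz0: "z \<in> ball 0 1 \<Longrightarrow> K z 0 = K 0 0"
  using transfer[of z 0 0] by simp

lemma K00: "K 0 0 *v x = (K 0 0 $ i0 $ i0) *s x"
proof -
  have z: "(0::complex^'d) \<in> ball 0 1" by simp
  obtain c where c: "K 0 0 *v axis i0 1 = c *s axis i0 1"
    using eig2[of "axis i0 1" 0 0] by auto
  have "c = K 0 0 $ i0 $ i0" using arg_cong[OF c, of "\<lambda>v. v $ i0"] by (simp add: col_entry)
  then have c0: "K 0 0 *v axis i0 1 = (K 0 0 $ i0 $ i0) *s axis i0 1" using c by simp
  show ?thesis
    by (rule common_eig[where P="\<lambda>x. True", OF _ _ _ _ c0])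
       (use eig2[of _ 0 0] in \<open>auto simp: vec_eq_iff axis_def\<close>)
qed

lemma Kc0: "Kc i0 0 = K 0 0"
proof -
  have "complex_of_real (rho 0) *s axis i0 1 \<in> ball 0 (1::real)"
    by (simp add: norm_e1smult rho_def)
  from K0w[OF this] show ?thesis by (simp add: Kc_def)
qed

lemma K00_entry: "K 0 0 $ i $ j = (if i = j then K 0 0 $ i0 $ i0 else 0)"
  using arg_cong[OF K00[of "axis j 1" i0], of "\<lambda>v. v $ i"] unfolding col_entry by (simp add: axis_def)

end


definition Fm :: "(complex \<Rightarrow> complex) \<Rightarrow> (complex \<Rightarrow> complex) \<Rightarrow> complex^'d \<Rightarrow> complex^'d \<Rightarrow> complex^'d^'d" where
  "Fm f g z w = cscale (f (cinner z w)) (mat 1) + cscale (g (cinner z w)) (outer z w)"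

lemma Fm_mv: "Fm f g z w *v y = f (cinner z w) *s y + (g (cinner z w) * cinner y w) *s z"
  by (simp add: Fm_def mv_add mv_cscale mv_outer vsmult_assoc)

lemma Fm_entry: "Fm f g z w $ i $ j = f (cinner z w) * (if i = j then 1 else 0) + g (cinner z w) * (z $ i * cnj (w $ j))"
  by (simp add: Fm_def cscale_def outer_def mat_def)

lemma axis_nz: "axis i (1::complex) \<noteq> (0::complex^'d)"
proof
  assume "axis i (1::complex) = (0::complex^'d)"
  then have "axis i (1::complex) $ i = (0::complex^'d) $ i" by simp
  then show False by simp
qed

lemma unit_normalize:
  assumes "q \<noteq> (0::complex^'d)"
  obtains v n where "0 < n" "cinner v v = 1" "q = complex_of_real n *s v"
proof -
  define n where "n = norm q"
  have n0: "n > 0" using assms by (simp add: n_def)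
  define v where "v = complex_of_real (1 / n) *s q"
  have xv: "q = complex_of_real n *s v" using n0 by (simp add: v_def vsmult_assoc)
  have xx: "cinner q q = complex_of_real (n^2)" by (simp add: cinner_self n_def)
  have v: "cinner v v = 1" using n0
    by (simp add: v_def cinner_scale_left cinner_scale_right xx power2_eq_square)
  show ?thesis using that n0 v xv by blast
qed

lemma cinner_se1: "cinner x (complex_of_real s *s axis i0 1) = complex_of_real s * x $ i0"
  by (simp add: cinner_scale_right cinner_axis_right)

context kern
begin

lemma scal_perp:
  assumes i1: "i1 \<noteq> i0" and z: "z \<in> ball 0 1" and w: "w \<in> ball 0 1"
    and we: "w = complex_of_real s *s axis i0 1"
    and x: "cinner x (axis i0 1) = 0"
  shows "K z w *v x = (K z w $ i1 $ i1) *s x"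
proof -
  have P: "\<exists>c. K z w *v x = c *s x" if "cinner x (axis i0 1) = 0" for x
    using eig2[OF _ w z, of x] that by (simp add: we cinner_scale_right)
  have e0: "cinner (axis i1 1) (axis i0 1 :: complex^'d) = 0"
    unfolding cinner_axis_right using i1 by (simp add: axis_def)
  obtain c where c: "K z w *v axis i1 1 = c *s axis i1 1" using P[OF e0] by blast
  have "c = K z w $ i1 $ i1" using arg_cong[OF c, of "\<lambda>v. v $ i1"] unfolding col_entry by simp
  then have c0: "K z w *v axis i1 1 = (K z w $ i1 $ i1) *s axis i1 1" using c by simp
  show ?thesis
    by (rule common_eig[where P="\<lambda>x. cinner x (axis i0 1) = 0", OF _ P e0 axis_nz c0 x])
       (simp_all add: cinner_add_left)
qed

lemma can_Af:
  assumes i1: "i1 \<noteq> i0" and s: "0 < s" "s < 1" and z: "z \<in> ball 0 1"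
  defines "w \<equiv> complex_of_real s *s axis i0 1"
  shows "K z w $ i1 $ i1 = Kc i0 (cinner z w) $ i1 $ i1"
    and "cinner (K z w *v axis i0 1) (axis i0 1) = Kc i0 (cinner z w) $ i0 $ i0"
proof -
  define e where "e = (axis i0 1 :: complex^'d)"
  have ee: "cinner e e = 1" by (simp add: e_def cinner_e1e1)
  have w: "w \<in> ball 0 1" using s by (simp add: w_def norm_e1smult)
  define z1 where "z1 = z $ i0"
  define z0 where "z0 = z1 *s e"
  define q where "q = z - z0"
  have "norm (z $ i0) \<le> norm z" by (rule Finite_Cartesian_Product.norm_nth_le)
  then have nz1: "cmod z1 < 1" using z by (simp add: z1_def)
  have z0: "z0 \<in> ball 0 1" using nz1 by (simp add: z0_def e_def norm_e1smult)
  have qe: "cinner q e = 0" by (simp add: q_def z0_def cinner_diff_left cinner_scale_left ee e_def cinner_axis_right z1_def)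
  have t: "cinner z w = complex_of_real s * z1" by (simp add: w_def cinner_se1 z1_def)
  have "K z0 w = Kc i0 (complex_of_real s * z1)" unfolding w_def z0_def e_def by (rule Kc_eq[OF s nz1])
  then have Kz0: "K z0 w = Kc i0 (cinner z w)" by (simp only: t)
  have we: "cinner w e = complex_of_real s" by (simp add: w_def e_def cinner_scale_left cinner_axis_right)
  have "K z w $ i1 $ i1 = Kc i0 (cinner z w) $ i1 $ i1 \<and>
        cinner (K z w *v e) e = Kc i0 (cinner z w) $ i0 $ i0"
  proof (cases "q = 0")
    case True
    then have "z = z0" by (simp add: q_def)
    then show ?thesis using Kz0 by (simp add: e_def entry_cinner[symmetric])
  next
    case False
    obtain v n where n: "0 < n" and v: "cinner v v = 1" and qv: "q = complex_of_real n *s v"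
      using unit_normalize[OF False] by blast
    have ve: "cinner v e = 0" using qe n by (simp add: qv cinner_scale_left)
    have ev: "cinner e v = 0" using ve cinner_eq0_sym by blast
    have z0v: "cinner z0 v = 0" by (simp add: z0_def cinner_scale_left ev)
    have wv: "cinner w v = 0" by (simp add: w_def e_def[symmetric] cinner_scale_left ev)
    have "z = z0 + q" by (simp add: q_def)
    then have zz: "z = z0 + complex_of_real n *s v" by (simp only: qv)
    have zin: "z0 + complex_of_real n *s v \<in> ball 0 1" using z zz by simp
    have sp: "K y w *v v = (K y w $ i1 $ i1) *s v" if "y \<in> ball 0 1" for y
      by (rule scal_perp[OF i1 that w w_def[THEN meta_eq_to_obj_eq]]) (simp add: ve[unfolded e_def])
    have "K z w $ i1 $ i1 = cinner (K z w *v v) v" using sp[OF z] v by (simp add: cinner_scale_left)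
    also have "\<dots> = cinner (K z0 w *v v) v" using wlB[OF v wv w z0v z0 zin] zz by simp
    also have "\<dots> = K z0 w $ i1 $ i1" using sp[OF z0] v by (simp add: cinner_scale_left)
    finally have 1: "K z w $ i1 $ i1 = Kc i0 (cinner z w) $ i1 $ i1" using Kz0 by simp
    have "cinner (K z w *v e) e = cinner (K z0 w *v e) e"
      using wlA[OF v wv w z0v z0 zin ev ev] zz by simp
    also have "\<dots> = K z0 w $ i0 $ i0" by (simp add: e_def entry_cinner[symmetric])
    finally show ?thesis using 1 Kz0 by simp
  qed
  then show "K z w $ i1 $ i1 = Kc i0 (cinner z w) $ i1 $ i1"
    and "cinner (K z w *v axis i0 1) (axis i0 1) = Kc i0 (cinner z w) $ i0 $ i0"
    by (simp_all add: e_def)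
qed

end


context kern
begin

lemma can_row:
  fixes z :: "complex^'d"
  assumes i1: "i1 \<noteq> i0" and s: "0 < s" "s < 1" and z: "z \<in> ball 0 1" and z1: "z $ i0 \<noteq> 0"
    and u: "cinner z u = 0"
  defines "w \<equiv> complex_of_real s *s axis i0 1"
  shows "cinner (K z w *v y) u = Kc i0 (cinner z w) $ i1 $ i1 * cinner y u"
proof (cases "u = 0")
  case True then show ?thesis by simp
next
  case False
  define F where "F = Kc i0 (cinner z w) $ i1 $ i1"
  define e where "e = (axis i0 1 :: complex^'d)"
  have w: "w \<in> ball 0 1" using s by (simp add: w_def norm_e1smult)
  have perp: "K z w *v x = F *s x" if "cinner x e = 0" for x
    using scal_perp[OF i1 z w w_def[THEN meta_eq_to_obj_eq], of x] can_Af(1)[OF i1 s z] that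
    by (simp add: F_def e_def w_def)
  have uz: "cinner u z = 0" using u cinner_eq0_sym by blast
  obtain c where c: "K w z *v u = c *s u" using eig2[OF uz z w] by blast
  have hz: "cadj (K z w) = K w z" using herm z w unfolding hermitian_kernel_def by blast
  have row: "cinner (K z w *v y) u = cnj c * cinner y u" for y
    by (simp add: cinner_adj hz c cinner_scale_right)
  define x' where "x' = u - (u $ i0) *s e"
  have x'e: "cinner x' e = 0"
    by (simp add: x'_def cinner_diff_left cinner_scale_left e_def cinner_axis_right)
  have nz: "cinner x' u \<noteq> 0"
  proof
    assume a: "cinner x' u = 0"
    have "cinner x' x' = cinner x' u - cnj (u $ i0) * cinner x' e"
      by (simp add: x'_def cinner_diff_right cinner_scale_right)
    then have "cinner x' x' = 0" using a x'e by simp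
    then have "x' = 0" by (simp add: cinner_self_eq_0)
    then have uu: "u = (u $ i0) *s e" by (simp add: x'_def)
    have "cinner z u = cinner z ((u $ i0) *s e)" by (rule arg_cong[OF uu])
    also have "\<dots> = cnj (u $ i0) * z $ i0" by (simp add: cinner_scale_right e_def cinner_axis_right)
    finally have "u $ i0 = 0" using u z1 by simp
    then have "u = 0" using uu by simp
    then show False using False by simp
  qed
  have "F * cinner x' u = cnj c * cinner x' u" using row[of x'] perp[OF x'e] by (simp add: cinner_scale_left)
  then have "cnj c = F" using nz by simp
  then show ?thesis using row[of y] by (simp add: F_def)
qed

lemma can_gen:
  fixes z :: "complex^'d"
  assumes i1: "i1 \<noteq> i0" and s: "0 < s" "s < 1" and z: "z \<in> ball 0 1" and z1: "z $ i0 \<noteq> 0"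
    and G: "\<And>t. t \<in> ball 0 1 \<Longrightarrow> t * G t = Kc i0 t $ i0 $ i0 - Kc i0 t $ i1 $ i1"
  defines "w \<equiv> complex_of_real s *s axis i0 1"
  shows "K z w = Fm (\<lambda>t. Kc i0 t $ i1 $ i1) G z w"
proof -
  define e where "e = (axis i0 1 :: complex^'d)"
  define t where "t = cinner z w"
  define F where "F = Kc i0 t $ i1 $ i1"
  define H where "H = Kc i0 t $ i0 $ i0"
  have w: "w \<in> ball 0 1" using s by (simp add: w_def norm_e1smult)
  have tt: "t = complex_of_real s * z $ i0" by (simp add: t_def w_def cinner_se1)
  have "norm (z $ i0) \<le> norm z" by (rule Finite_Cartesian_Product.norm_nth_le)
  then have nz1: "cmod (z $ i0) < 1" using z by simp
  have "cmod t = s * cmod (z $ i0)" using s by (simp add: tt norm_mult)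
  also have "\<dots> < 1 * 1" using s nz1 by (intro mult_strict_mono) auto
  finally have tb: "t \<in> ball 0 1" by simp
  have perp: "K z w *v x = F *s x" if "cinner x e = 0" for x
    using scal_perp[OF i1 z w w_def[THEN meta_eq_to_obj_eq], of x] can_Af(1)[OF i1 s z] that
    by (simp add: F_def e_def w_def t_def)
  have row: "cinner (K z w *v y) u = F * cinner y u" if "cinner z u = 0" for u y
    using can_row[OF i1 s z z1 that] by (simp add: F_def t_def w_def)
  have he: "cinner (K z w *v e) e = H" using can_Af(2)[OF i1 s z] by (simp add: H_def t_def e_def w_def)
  define r where "r = K z w *v e - F *s e - (G t * complex_of_real s) *s z"
  have rperp: "cinner r u = 0" if "cinner z u = 0" for u
    using row[OF that, of e] that by (simp add: r_def cinner_diff_left cinner_scale_left)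
  have ze: "cinner z e = z $ i0" by (simp add: e_def cinner_axis_right)
  have ee: "cinner e e = 1" by (simp add: e_def cinner_e1e1)
  have GG: "G t * complex_of_real s * z $ i0 = H - F"
    using G[OF tb] by (simp add: tt H_def F_def mult_ac)
  have re: "cinner r e = 0"
    by (simp add: r_def cinner_diff_left cinner_scale_left he ee ze GG)
  have z0: "z \<noteq> 0" using z1 by auto
  have zz: "cinner z z \<noteq> 0" using z0 cinner_self_eq_0 by blast
  define \<mu> where "\<mu> = cinner r z / cinner z z"
  define u where "u = r - \<mu> *s z"
  have uz: "cinner u z = 0" using zz by (simp add: u_def cinner_diff_left cinner_scale_left \<mu>_def)
  have zu: "cinner z u = 0" using uz cinner_eq0_sym by blast
  have ru: "cinner r u = 0" by (rule rperp[OF zu])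
  have "cinner u u = cinner r u - \<mu> * cinner z u" by (simp add: u_def cinner_diff_left cinner_scale_left)
  then have "u = 0" using ru zu by (simp add: cinner_self_eq_0)
  then have rmu: "r = \<mu> *s z" by (simp add: u_def)
  have "cinner r e = \<mu> * z $ i0" by (simp add: rmu cinner_scale_left ze)
  then have "\<mu> = 0" using re z1 by simp
  then have "r = 0" using rmu by simp
  then have Ke: "K z w *v e = F *s e + (G t * complex_of_real s) *s z"
    by (simp add: r_def vec_eq_iff algebra_simps)
  have "K z w *v y = Fm (\<lambda>t. Kc i0 t $ i1 $ i1) G z w *v y" for y
  proof -
    define y' where "y' = y - (y $ i0) *s e"
    have y'e: "cinner y' e = 0" by (simp add: y'_def cinner_diff_left cinner_scale_left ee ze e_def cinner_axis_right)
    have "K z w *v y' = K z w *v y - (y $ i0) *s (K z w *v e)" by (simp add: y'_def mv_vdiff mv_vscale)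
    then have Ky: "K z w *v y = F *s y' + (y $ i0) *s (F *s e + (G t * complex_of_real s) *s z)"
      using perp[OF y'e] Ke by simp
    have yw: "cinner y w = complex_of_real s * y $ i0" by (simp add: w_def cinner_se1)
    show ?thesis
      by (simp add: Ky Fm_mv yw t_def[symmetric] F_def[symmetric] y'_def vec_eq_iff algebra_simps)
  qed
  then show ?thesis by (simp add: matrix_eq)
qed

end


context kern
begin

lemma can_all:
  fixes z :: "complex^'d"
  assumes i1: "i1 \<noteq> i0" and s: "0 < s" "s < 1" and z: "z \<in> ball 0 1"
    and G: "\<And>t. t \<in> ball 0 1 \<Longrightarrow> t * G t = Kc i0 t $ i0 $ i0 - Kc i0 t $ i1 $ i1"
    and Gc: "isCont G 0"
  defines "w \<equiv> complex_of_real s *s axis i0 1"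
  shows "K z w = Fm (\<lambda>t. Kc i0 t $ i1 $ i1) G z w"
proof (cases "z $ i0 = 0")
  case False then show ?thesis using can_gen[OF i1 s z False G] by (simp add: w_def)
next
  case True
  define f where "f = (\<lambda>t. Kc i0 t $ i1 $ i1)"
  define e where "e = (axis i0 1 :: complex^'d)"
  define \<delta> where "\<delta> = sqrt (1 - (norm z)^2)"
  have ze: "cinner z e = 0" using True by (simp add: e_def cinner_axis_right)
  have ee: "cinner e e = 1" by (simp add: e_def cinner_e1e1)
  have pb: "z + \<epsilon> *s e \<in> ball 0 1 \<longleftrightarrow> \<epsilon> \<in> ball 0 \<delta>" for \<epsilon>
    using perp_ball[OF ze ee z] by (simp add: \<delta>_def)
  have d0: "0 < \<delta>" using pb[of 0] z by simp
  have w: "w \<in> ball 0 1" using s by (simp add: w_def norm_e1smult)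
  have fc: "isCont f 0"
  proof -
    have "continuous_on (ball 0 1) f" unfolding f_def by (rule holomorphic_on_imp_continuous_on[OF Kc_holo])
    then show ?thesis by (rule continuous_on_interior) simp
  qed
  have hf: "isCont (\<lambda>\<epsilon>. f (complex_of_real s * \<epsilon>)) 0"
    by (rule isCont_o2[where f="\<lambda>\<epsilon>. complex_of_real s * \<epsilon>"]) (simp_all add: fc)
  have hG: "isCont (\<lambda>\<epsilon>. G (complex_of_real s * \<epsilon>)) 0"
    by (rule isCont_o2[where f="\<lambda>\<epsilon>. complex_of_real s * \<epsilon>"]) (simp_all add: Gc)
  have te: "cinner (z + \<epsilon> *s e) w = complex_of_real s * \<epsilon>" for \<epsilon>
    using True by (simp add: w_def cinner_se1 e_def)
  have "K z w $ i $ j = Fm f G z w $ i $ j" for i j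
  proof -
    define \<psi> where "\<psi> = (\<lambda>\<epsilon>. K (z + \<epsilon> *s e) w $ i $ j - (f (complex_of_real s * \<epsilon>) * (if i = j then 1 else 0)
        + G (complex_of_real s * \<epsilon>) * ((z $ i + \<epsilon> * e $ i) * cnj (w $ j))))"
    have hK: "(\<lambda>\<epsilon>. K (z + \<epsilon> *s e) w $ i $ j) holomorphic_on ball 0 \<delta>"
      by (rule Kline_entry_holo[OF w open_ball]) (use pb in blast)
    have cK: "isCont (\<lambda>\<epsilon>. K (z + \<epsilon> *s e) w $ i $ j) 0"
      by (rule continuous_on_interior[OF holomorphic_on_imp_continuous_on[OF hK]]) (use d0 in simp)
    have c\<psi>: "isCont \<psi> 0" unfolding \<psi>_def
      by (intro continuous_intros cK hf hG)
    have "\<psi> 0 = 0"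
    proof (rule zero_by_cont[OF c\<psi> d0])
      fix \<epsilon> :: complex assume e0: "\<epsilon> \<noteq> 0" and ed: "cmod \<epsilon> < \<delta>"
      have zb: "z + \<epsilon> *s e \<in> ball 0 1" using pb ed by simp
      have "(z + \<epsilon> *s e) $ i0 \<noteq> 0" using True e0 by (simp add: e_def)
      from can_gen[OF i1 s zb this G]
      have "K (z + \<epsilon> *s e) w = Fm f G (z + \<epsilon> *s e) w" by (simp add: w_def f_def)
      then have "K (z + \<epsilon> *s e) w $ i $ j = Fm f G (z + \<epsilon> *s e) w $ i $ j" by simp
      then show "\<psi> \<epsilon> = 0" by (simp add: \<psi>_def Fm_entry te)
    qed
    moreover have "cinner z w = 0" using te[of 0] by simp
    ultimately show ?thesis by (simp add: \<psi>_def Fm_entry)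
  qed
  then show ?thesis by (simp add: vec_eq_iff f_def)
qed

end


lemma Fm_cong: "f (cinner z w) = f' (cinner z w) \<Longrightarrow> g (cinner z w) = g' (cinner z w) \<Longrightarrow> Fm f g z w = Fm f' g' z w"
  by (simp add: Fm_def)

lemma card1_eq: "CARD('d::finite) = 1 \<Longrightarrow> (i::'d) = j"
  by (metis card_1_singletonE UNIV_I singletonD)

context kern
begin

lemma covar:
  assumes u: "unitary_mat U" and z: "z \<in> ball 0 1" and w: "w \<in> ball 0 1"
    and F: "K (cadj U *v z) (cadj U *v w) = Fm f g (cadj U *v z) (cadj U *v w)"
  shows "K z w = Fm f g z w"
proof -
  have ci: "cinner (cadj U *v z) (cadj U *v w) = cinner z w" by (rule unitary_adj_cinner[OF u])
  have "K z w *v x = Fm f g z w *v x" for x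
  proof -
    have "K z w *v x = U *v (Fm f g (cadj U *v z) (cadj U *v w) *v (cadj U *v x))"
      using inv_mv[OF u z w] F by simp
    also have "\<dots> = U *v (f (cinner z w) *s (cadj U *v x) + (g (cinner z w) * cinner (cadj U *v x) (cadj U *v w)) *s (cadj U *v z))"
      by (simp add: Fm_mv ci)
    also have "\<dots> = f (cinner z w) *s x + (g (cinner z w) * cinner x w) *s z"
      by (simp add: mv_vadd mv_vscale unitaryD[OF u] unitary_adj_cinner[OF u])
    finally show ?thesis by (simp add: Fm_mv)
  qed
  then show ?thesis by (simp add: matrix_eq)
qed

lemma unitary_ball: "unitary_mat U \<Longrightarrow> z \<in> ball 0 1 \<Longrightarrow> cadj U *v z \<in> ball 0 1"
  by (simp add: unitary_norm)

lemma reduce: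
  assumes can: "\<And>s z. 0 < s \<Longrightarrow> s < 1 \<Longrightarrow> z \<in> ball 0 1 \<Longrightarrow>
      K z (complex_of_real s *s axis i0 1) = Fm f g z (complex_of_real s *s axis i0 1)"
    and z: "z \<in> ball 0 1" and w: "w \<in> ball 0 1"
  shows "K z w = Fm f g z w"
proof (cases "w = 0")
  case True
  have h: "complex_of_real (1/2) *s axis i0 1 \<in> ball 0 (1::real)" by (simp add: norm_e1smult)
  have "K z w = K 0 0" using Kz0[OF z] True by simp
  also have "\<dots> = K 0 (complex_of_real (1/2) *s axis i0 1)" using K0w[OF h] by simp
  also have "\<dots> = Fm f g 0 (complex_of_real (1/2) *s axis i0 1)" by (rule can) auto
  also have "\<dots> = Fm f g z w"
  proof -
    have "outer z (0::complex^'d) = 0" "outer 0 (complex_of_real (1/2) *s axis i0 1 :: complex^'d) = 0"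
      "\<And>c. cscale c (0::complex^'d^'d) = 0"
      by (simp_all add: outer_def cscale_def vec_eq_iff)
    then show ?thesis using True by (simp add: Fm_def)
  qed
  finally show ?thesis .
next
  case False
  define e where "e = (axis i0 1 :: complex^'d)"
  have ee: "cinner e e = 1" by (simp add: e_def cinner_e1e1)
  define s where "s = norm w"
  have s: "0 < s" "s < 1" using False w by (simp_all add: s_def)
  define a where "a = cmod (w $ i0)"
  define \<omega> where "\<omega> = (if w $ i0 = 0 then 1 else w $ i0 / complex_of_real a)"
  have om: "cmod \<omega> = 1" by (simp add: \<omega>_def a_def norm_divide)
  have cw: "cnj \<omega> * w $ i0 = complex_of_real a"
  proof (cases "w $ i0 = 0")
    case True then show ?thesis by (simp add: \<omega>_def a_def)
  next
    case False
    then have "a \<noteq> 0" by (simp add: a_def)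
    then show ?thesis using False
      by (simp add: \<omega>_def a_def field_simps complex_norm_square[symmetric] power2_eq_square)
  qed
  define U1 where "U1 = rotm \<omega> e"
  have u1: "unitary_mat U1" by (simp add: U1_def rotm_unitary[OF om ee])
  define w2 where "w2 = cadj U1 *v w"
  define z2 where "z2 = cadj U1 *v z"
  have w2b: "w2 \<in> ball 0 1" and z2b: "z2 \<in> ball 0 1" using unitary_ball[OF u1] z w by (simp_all add: w2_def z2_def)
  have w2i: "w2 $ i0 = complex_of_real a"
    using cw by (simp add: w2_def U1_def cadj_rotm rotm_mv e_def cinner_axis_right algebra_simps)
  have w2n: "cinner w2 w2 = complex_of_real (s^2)"
    using unitary_adj_cinner[OF u1, of w w] by (simp add: w2_def cinner_self s_def)
  have F2: "K z2 w2 = Fm f g z2 w2"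
  proof (cases "w2 = complex_of_real s *s e")
    case True then show ?thesis using can[OF s z2b] by (simp add: e_def)
  next
    case False
    define d where "d = w2 - complex_of_real s *s e"
    have d0: "d \<noteq> 0" using False by (simp add: d_def)
    obtain v n where n: "0 < n" and v: "cinner v v = 1" and dv: "d = complex_of_real n *s v"
      using unit_normalize[OF d0] by blast
    define U2 where "U2 = rotm (-1) v"
    have u2: "unitary_mat U2" using rotm_unitary[OF _ v, of "-1"] by (simp add: U2_def)
    have wse: "cinner w2 (complex_of_real s *s e) = complex_of_real (s * a)"
      by (simp add: cinner_scale_right e_def cinner_axis_right w2i)
    have sew: "cinner (complex_of_real s *s e) w2 = complex_of_real (s * a)"
      using wse cinner_cnj[of "complex_of_real s *s e" w2] by simp
    have we2: "cinner w2 e = complex_of_real a" by (simp add: e_def cinner_axis_right w2i)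
    have ew2: "cinner e w2 = complex_of_real a" by (simp add: e_def cinner_axis_left w2i)
    have key: "2 * cinner w2 d = cinner d d"
      using w2n ee we2 ew2 by (simp add: d_def cinner_diff_left cinner_diff_right cinner_scale_left cinner_scale_right power2_eq_square algebra_simps)
    have dd: "cinner d d = complex_of_real (n^2)"
      using v by (simp add: dv cinner_scale_left cinner_scale_right power2_eq_square)
    have "cadj U2 *v w2 = w2 + (-2 * cinner w2 v) *s v"
      by (simp add: U2_def cadj_rotm rotm_mv)
    also have "(-2 * cinner w2 v) *s v = - d"
    proof -
      have "cinner w2 d = complex_of_real n * cinner w2 v" by (simp add: dv cinner_scale_right)
      then have "2 * complex_of_real n * cinner w2 v = complex_of_real (n^2)" using key dd by (simp add: mult.assoc)
      then have "2 * cinner w2 v = complex_of_real n" using n by (simp add: power2_eq_square)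
      then show ?thesis by (simp add: dv vec_eq_iff algebra_simps)
    qed
    finally have "cadj U2 *v w2 = complex_of_real s *s e" by (simp add: d_def)
    moreover have "cadj U2 *v z2 \<in> ball 0 1" using unitary_ball[OF u2 z2b] .
    ultimately have "K (cadj U2 *v z2) (cadj U2 *v w2) = Fm f g (cadj U2 *v z2) (cadj U2 *v w2)"
      using can[OF s] by (simp add: e_def)
    then show ?thesis by (rule covar[OF u2 z2b w2b])
  qed
  show ?thesis by (rule covar[OF u1 z w]) (use F2 in \<open>simp add: w2_def z2_def\<close>)
qed

lemma can1:
  fixes z :: "complex^'d"
  assumes d1: "CARD('d) = 1" and s: "0 < s" "s < 1" and z: "z \<in> ball 0 1"
    and G: "\<And>t. t \<in> ball 0 1 \<Longrightarrow> t * G t = Kc i0 t $ i0 $ i0 - c0"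
  defines "w \<equiv> complex_of_real s *s axis i0 1"
  shows "K z w = Fm (\<lambda>t. c0) G z w"
proof -
  have all: "\<And>i::'d. i = i0" using card1_eq[OF d1] by blast
  have zz: "z = z $ i0 *s axis i0 1" by (simp add: vec_eq_iff axis_def all[of _])
       (metis all)
  have "norm (z $ i0) \<le> norm z" by (rule Finite_Cartesian_Product.norm_nth_le)
  then have nz1: "cmod (z $ i0) < 1" using z by simp
  have t: "cinner z w = complex_of_real s * z $ i0" by (simp add: w_def cinner_se1)
  have "cmod (cinner z w) = s * cmod (z $ i0)" using s by (simp add: t norm_mult)
  also have "\<dots> < 1 * 1" using s nz1 by (intro mult_strict_mono) auto
  finally have tb: "cinner z w \<in> ball 0 1" by simp
  have "K z w = Kc i0 (cinner z w)"
    using Kc_eq[OF s nz1, of i0] zz t by (simp add: w_def)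
  then have "K z w $ i $ j = Fm (\<lambda>t. c0) G z w $ i $ j" for i j
    using G[OF tb] all[of i] all[of j] t
    by (simp add: Fm_entry w_def algebra_simps)
  then show ?thesis by (simp add: vec_eq_iff)
qed

end


lemma shift_summable:
  fixes a :: "nat \<Rightarrow> complex"
  assumes A: "\<And>t. cmod t < 1 \<Longrightarrow> summable (\<lambda>n. norm (a n * t^n))" and t: "cmod t < 1"
  shows "summable (\<lambda>n. norm (a (Suc n) * t^n))"
proof -
  define x where "x = complex_of_real ((1 + cmod t)/2)"
  have nx: "cmod x = (1 + cmod t)/2" unfolding x_def norm_of_real using norm_ge_zero[of t] by simp
  have x12: "cmod t < cmod x" "cmod x < 1" using t nx by simp_all
  have "x \<noteq> 0" using x12(1) norm_ge_zero[of t] by auto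
  note x = x12 this
  have "summable (\<lambda>n. norm (a n * x^n))" using A x by simp
  then have "summable (\<lambda>n. norm (a (Suc n) * x^(Suc n)))" by (subst summable_Suc_iff)
  then have "summable (\<lambda>n. norm (a (Suc n) * x^(Suc n)) / cmod x)" by (rule summable_divide)
  moreover have "(\<lambda>n. norm (a (Suc n) * x^(Suc n)) / cmod x) = (\<lambda>n. norm (a (Suc n) * x^n))"
    using x by (intro ext) (simp add: norm_mult norm_power)
  ultimately have "summable (\<lambda>n. norm (a (Suc n) * x^n))" by (simp only:)
  then have "summable (\<lambda>n. a (Suc n) * x^n)" by (rule summable_norm_cancel)
  from powser_insidea[OF this x(1)] show ?thesis .
qed

lemma powser_abs:
  fixes c :: "nat \<Rightarrow> complex"
  assumes S: "\<And>t. cmod t < 1 \<Longrightarrow> summable (\<lambda>n. c n * t^n)" and t: "cmod t < 1"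
  shows "summable (\<lambda>n. norm (c n * t^n))"
proof -
  define x where "x = complex_of_real ((1 + cmod t)/2)"
  have nx: "cmod x = (1 + cmod t)/2" unfolding x_def norm_of_real using norm_ge_zero[of t] by simp
  have x: "cmod t < cmod x" "cmod x < 1" using t nx by simp_all
  show ?thesis by (rule powser_insidea[OF S[OF x(2)] x(1)])
qed

lemma ps_shift_sums:
  fixes c :: "nat \<Rightarrow> complex"
  assumes "(\<lambda>n. c n * t^n) sums S"
  shows "(\<lambda>n. t * (c (Suc n) * t^n)) sums (S - c 0)"
proof -
  have "(\<lambda>n. c n * t^n) sums ((S - c 0) + c 0 * t^0)" using assms by simp
  then have "(\<lambda>n. c (Suc n) * t^(Suc n)) sums (S - c 0)"
    using sums_Suc_iff[of "\<lambda>n. c n * t^n" "S - c 0"] by simp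
  then show ?thesis by (simp add: mult_ac)
qed

lemma norm_cscale: "norm (cscale x (A::complex^'d^'d)) = cmod x * norm A"
proof -
  have row: "cscale x A $ i = x *s (A $ i)" for i by (simp add: cscale_def vec_eq_iff)
  have "norm (cscale x A) = L2_set (\<lambda>i. cmod x * norm (A $ i)) UNIV"
    unfolding norm_vec_def[of "cscale x A"] by (simp add: row norm_vsmult)
  also have "\<dots> = cmod x * L2_set (\<lambda>i. norm (A $ i)) UNIV"
    by (rule L2_set_right_distrib[symmetric]) simp
  finally show ?thesis by (simp add: norm_vec_def)
qed

lemma bl_cscale: "bounded_linear (\<lambda>x. cscale x (A::complex^'d^'d))"
proof (rule bounded_linear_intro[where K="norm A"])
  show "\<And>x y. cscale (x + y) A = cscale x A + cscale y A" by (simp add: cscale_def vec_eq_iff algebra_simps)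
  show "\<And>r x. cscale (r *\<^sub>R x) A = r *\<^sub>R cscale x A" by (simp add: cscale_def vec_eq_iff)
  show "\<And>x. norm (cscale x A) \<le> norm x * norm A" by (simp add: norm_cscale)
qed

lemma cscale_sums: "summable c \<Longrightarrow> (\<lambda>j. cscale (c j) (A::complex^'d^'d)) sums cscale (suminf c) A"
  using bounded_linear.sums[OF bl_cscale, of c "suminf c" A] summable_sums by blast

lemma cscale_diff: "cscale x (A - B) = cscale x A - cscale x (B::complex^'d^'d)"
  by (simp add: cscale_def vec_eq_iff algebra_simps)
lemma cscale_cscale: "cscale x (cscale y A) = cscale (x * y) (A::complex^'d^'d)"
  by (simp add: cscale_def vec_eq_iff)
lemma cscale_add_left: "cscale (x + y) A = cscale x A + cscale y (A::complex^'d^'d)"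
  by (simp add: cscale_def vec_eq_iff algebra_simps)
lemma cscale_zero: "cscale 0 (A::complex^'d^'d) = 0"
  by (simp add: cscale_def vec_eq_iff)

lemma cauchy_schwarz_c: "cmod (cinner z w) \<le> norm z * norm (w::complex^'d)"
proof (cases "w = 0")
  case True then show ?thesis by simp
next
  case False
  define N where "N = (norm w)^2"
  have N: "N > 0" using False by (simp add: N_def)
  define p where "p = cinner z w"
  define c where "c = p / complex_of_real N"
  have ww: "cinner w w = complex_of_real N" by (simp add: N_def cinner_self)
  have wz: "cinner w z = cnj p" by (simp add: p_def cinner_cnj[of w z])
  have "cinner (z - c *s w) (z - c *s w) = cinner z z - cnj c * p - c * cnj p + c * cnj c * complex_of_real N"
    by (simp add: cinner_diff_left cinner_diff_right cinner_scale_left cinner_scale_right ww wz p_def algebra_simps)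
  also have "\<dots> = complex_of_real ((norm z)^2 - (cmod p)^2 / N)"
  proof -
    have pp1: "p * cnj p = complex_of_real ((cmod p)^2)" by (metis complex_norm_square)
    have pp2: "cnj p * p = complex_of_real ((cmod p)^2)" by (metis complex_norm_square mult.commute)
    have cc: "cnj c = cnj p / complex_of_real N" by (simp add: c_def)
    have "cnj c * p = complex_of_real ((cmod p)^2 / N)" using pp2 by (simp add: cc)
    moreover have "c * cnj p = complex_of_real ((cmod p)^2 / N)" using pp1 by (simp add: c_def)
    moreover have "c * cnj c * complex_of_real N = complex_of_real ((cmod p)^2 / N)"
      using pp1 N by (simp add: c_def cc)
    ultimately show ?thesis by (simp add: cinner_self)
  qed
  finally have "complex_of_real ((norm (z - c *s w))^2) = complex_of_real ((norm z)^2 - (cmod p)^2 / N)"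
    by (simp add: cinner_self)
  then have "(norm (z - c *s w))^2 = (norm z)^2 - (cmod p)^2 / N" using of_real_eq_iff by blast
  then have "(cmod p)^2 / N \<le> (norm z)^2" by (smt (verit) zero_le_power2)
  then have "(cmod p)^2 \<le> (norm z)^2 * (norm w)^2" using N by (simp add: N_def field_simps)
  then have "(cmod p)^2 \<le> (norm z * norm w)^2" by (simp add: power_mult_distrib)
  then show ?thesis unfolding p_def by (rule power2_le_imp_le) simp
qed

lemma cinner_ball: "z \<in> ball 0 1 \<Longrightarrow> w \<in> ball 0 1 \<Longrightarrow> cmod (cinner z w) < 1"
proof -
  assume "z \<in> ball 0 1" "w \<in> ball 0 1"
  then have "norm z * norm w < 1 * 1" by (intro mult_strict_mono') auto
  then show ?thesis using cauchy_schwarz_c[of z w] by simp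
qed


context kern
begin

lemma can_ball: "0 < s \<Longrightarrow> s < 1 \<Longrightarrow> z \<in> ball 0 1 \<Longrightarrow> cmod (cinner z (complex_of_real s *s axis i0 1)) < 1"
  by (rule cinner_ball) (simp_all add: norm_e1smult)

lemma main_formula:
  obtains a b :: "nat \<Rightarrow> complex" where
    "\<And>t. cmod t < 1 \<Longrightarrow> summable (\<lambda>n. norm (a n * t^n))"
    "\<And>t. cmod t < 1 \<Longrightarrow> summable (\<lambda>n. norm (b n * t^n))"
    "\<And>z w. z \<in> ball 0 1 \<Longrightarrow> w \<in> ball 0 1 \<Longrightarrow> K z w = Fm (\<lambda>t. \<Sum>n. a n * t^n) (\<lambda>t. \<Sum>n. b n * t^n) z w"
proof -
  obtain i0 :: 'd where True by simp
  define H where "H = (\<lambda>t. Kc i0 t $ i0 $ i0)"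
  define cH where "cH = (\<lambda>n. (deriv ^^ n) H 0 / fact n)"
  have Hh: "H holomorphic_on ball 0 1" unfolding H_def by (rule Kc_holo)
  have Hs: "(\<lambda>n. cH n * t^n) sums H t" if "cmod t < 1" for t
  proof -
    have "(\<lambda>n. (deriv ^^ n) H 0 / fact n * (t - 0)^n) sums H t"
      by (rule holomorphic_power_series[OF Hh]) (simp add: that)
    then show ?thesis by (simp add: cH_def)
  qed
  have HA: "summable (\<lambda>n. norm (cH n * t^n))" if "cmod t < 1" for t
    by (rule powser_abs[OF _ that]) (use Hs sums_summable in blast)
  have H0: "cH 0 = K 0 0 $ i0 $ i0" by (simp add: cH_def H_def Kc0)
  show ?thesis
  proof (cases "CARD('d) = 1")
    case True
    define a where "a = (\<lambda>n::nat. if n = 0 then cH 0 else 0)"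
    define b where "b = (\<lambda>n. cH (Suc n))"
    have aeq: "(\<lambda>n. a n * t^n) = (\<lambda>n. if n = 0 then cH 0 else 0)" for t by (auto simp: a_def)
    have asum: "(\<lambda>n. a n * t^n) sums cH 0" for t
      unfolding aeq using sums_single[of 0 "\<lambda>_. cH 0"] by simp
    have aabs: "summable (\<lambda>n. norm (a n * t^n))" for t
    proof -
      have "(\<lambda>n. norm (a n * t^n)) = (\<lambda>n. if n = 0 then norm (cH 0) else 0)" by (auto simp: a_def)
      then show ?thesis by simp
    qed
    have babs: "summable (\<lambda>n. norm (b n * t^n))" if "cmod t < 1" for t
      unfolding b_def by (rule shift_summable[OF HA that])
    define G where "G = (\<lambda>t. \<Sum>n. b n * t^n)"
    have G: "t * G t = Kc i0 t $ i0 $ i0 - cH 0" if "t \<in> ball 0 1" for t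
    proof -
      have t1: "cmod t < 1" using that by simp
      have s: "(\<lambda>n. t * (b n * t^n)) sums (H t - cH 0)" unfolding b_def by (rule ps_shift_sums[OF Hs[OF t1]])
      have "summable (\<lambda>n. b n * t^n)" using babs[OF t1] by (rule summable_norm_cancel)
      then have "t * G t = (\<Sum>n. t * (b n * t^n))" by (simp add: G_def suminf_mult)
      also have "\<dots> = H t - cH 0" using s by (rule sums_unique[symmetric])
      finally show ?thesis by (simp add: H_def)
    qed
    show ?thesis
    proof (rule that[of a b])
      show "\<And>t. cmod t < 1 \<Longrightarrow> summable (\<lambda>n. norm (a n * t^n))" using aabs by blast
      show "\<And>t. cmod t < 1 \<Longrightarrow> summable (\<lambda>n. norm (b n * t^n))" using babs by blast
      fix z w :: "complex^'d" assume z: "z \<in> ball 0 1" and w: "w \<in> ball 0 1"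
      show "K z w = Fm (\<lambda>t. \<Sum>n. a n * t^n) (\<lambda>t. \<Sum>n. b n * t^n) z w"
      proof (rule reduce[of i0, OF _ z w])
        fix s :: real and z :: "complex^'d" assume s: "0 < s" "s < 1" and z: "z \<in> ball 0 1"
        have "K z (complex_of_real s *s axis i0 1) = Fm (\<lambda>t. cH 0) G z (complex_of_real s *s axis i0 1)"
          by (rule can1[OF True s z G])
        also have "\<dots> = Fm (\<lambda>t. \<Sum>n. a n * t^n) (\<lambda>t. \<Sum>n. b n * t^n) z (complex_of_real s *s axis i0 1)"
          by (rule Fm_cong) (simp_all add: G_def sums_unique[OF asum])
        finally show "K z (complex_of_real s *s axis i0 1) = Fm (\<lambda>t. \<Sum>n. a n * t^n) (\<lambda>t. \<Sum>n. b n * t^n) z (complex_of_real s *s axis i0 1)" .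
      qed
    qed
  next
    case False
    have "\<not> (\<forall>i::'d. i = i0)"
    proof
      assume "\<forall>i::'d. i = i0"
      then have "(UNIV::'d set) = {i0}" by auto
      then have "CARD('d) = card {i0}" by (rule arg_cong)
      then show False using False by simp
    qed
    then obtain i1 :: 'd where i1: "i1 \<noteq> i0" by blast
    define F where "F = (\<lambda>t. Kc i0 t $ i1 $ i1)"
    define cF where "cF = (\<lambda>n. (deriv ^^ n) F 0 / fact n)"
    have Fh: "F holomorphic_on ball 0 1" unfolding F_def by (rule Kc_holo)
    have Fs: "(\<lambda>n. cF n * t^n) sums F t" if "cmod t < 1" for t
    proof -
      have "(\<lambda>n. (deriv ^^ n) F 0 / fact n * (t - 0)^n) sums F t"
        by (rule holomorphic_power_series[OF Fh]) (simp add: that)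
      then show ?thesis by (simp add: cF_def)
    qed
    have FA: "summable (\<lambda>n. norm (cF n * t^n))" if "cmod t < 1" for t
      by (rule powser_abs[OF _ that]) (use Fs sums_summable in blast)
    have F0: "cF 0 = cH 0" using H0 K00_entry[of i1 i1 i0] by (simp add: cF_def F_def Kc0)
    define a where "a = cF"
    define b where "b = (\<lambda>n. cH (Suc n) - cF (Suc n))"
    have babs: "summable (\<lambda>n. norm (b n * t^n))" if "cmod t < 1" for t
    proof (rule summable_comparison_test')
      show "summable (\<lambda>n. norm (cH (Suc n) * t^n) + norm (cF (Suc n) * t^n))"
        by (intro summable_add shift_summable[OF HA that] shift_summable[OF FA that])
      show "norm (norm (b n * t^n)) \<le> norm (cH (Suc n) * t^n) + norm (cF (Suc n) * t^n)" for n
        by (simp add: b_def left_diff_distrib norm_triangle_ineq4)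
    qed
    define G where "G = (\<lambda>t. \<Sum>n. b n * t^n)"
    have bsum: "summable (\<lambda>n. b n * t^n)" if "cmod t < 1" for t
      using babs[OF that] by (rule summable_norm_cancel)
    have G: "t * G t = Kc i0 t $ i0 $ i0 - Kc i0 t $ i1 $ i1" if "t \<in> ball 0 1" for t
    proof -
      have t1: "cmod t < 1" using that by simp
      have s: "(\<lambda>n. t * (cH (Suc n) * t^n) - t * (cF (Suc n) * t^n)) sums ((H t - cH 0) - (F t - cF 0))"
        by (intro sums_diff ps_shift_sums Hs Fs t1)
      have "t * G t = (\<Sum>n. t * (b n * t^n))" using bsum[OF t1] by (simp add: G_def suminf_mult)
      also have "\<dots> = (H t - cH 0) - (F t - cF 0)"
        using s by (simp add: b_def algebra_simps sums_iff)
      finally show ?thesis by (simp add: H_def F_def F0)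
    qed
    have Gc: "isCont G 0"
      unfolding G_def by (rule isCont_powser[where K="1/2"]) (use bsum[of "1/2"] in simp_all)
    show ?thesis
    proof (rule that[of a b])
      show "\<And>t. cmod t < 1 \<Longrightarrow> summable (\<lambda>n. norm (a n * t^n))" using FA by (simp add: a_def)
      show "\<And>t. cmod t < 1 \<Longrightarrow> summable (\<lambda>n. norm (b n * t^n))" using babs by blast
      fix z w :: "complex^'d" assume z: "z \<in> ball 0 1" and w: "w \<in> ball 0 1"
      show "K z w = Fm (\<lambda>t. \<Sum>n. a n * t^n) (\<lambda>t. \<Sum>n. b n * t^n) z w"
      proof (rule reduce[of i0, OF _ z w])
        fix s :: real and z :: "complex^'d" assume s: "0 < s" "s < 1" and z: "z \<in> ball 0 1"
        have "K z (complex_of_real s *s axis i0 1) = Fm F G z (complex_of_real s *s axis i0 1)"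
          using can_all[OF i1 s z G Gc] by (simp add: F_def)
        also have "\<dots> = Fm (\<lambda>t. \<Sum>n. a n * t^n) (\<lambda>t. \<Sum>n. b n * t^n) z (complex_of_real s *s axis i0 1)"
          by (rule Fm_cong) (simp_all add: G_def a_def sums_unique[OF Fs[OF can_ball[OF s z]]])
        finally show "K z (complex_of_real s *s axis i0 1) = Fm (\<lambda>t. \<Sum>n. a n * t^n) (\<lambda>t. \<Sum>n. b n * t^n) z (complex_of_real s *s axis i0 1)" .
      qed
    qed
  qed
qed

end


lemma alg1: "(F::complex) \<noteq> 0 \<Longrightarrow> N \<noteq> 0 \<Longrightarrow> x * (S * F) * (T / (N * F)) = x * S / N * T"
  by (simp add: field_simps)
lemma alg2: "(S::complex) \<noteq> 0 \<Longrightarrow> N \<noteq> 0 \<Longrightarrow> (x * S / N * T) * (N / S * t) = x * (t * T)"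
  by (simp add: field_simps)
lemma alg3: "(F::complex) \<noteq> 0 \<Longrightarrow> N \<noteq> 0 \<Longrightarrow> (x * (S * F) + y * N * F) * (T / (N * F)) = x * S / N * T + y * T"
  by (simp add: field_simps)

theorem theorem3p10:
  fixes K :: "complex ^ 'd \<Rightarrow> complex ^ 'd \<Rightarrow> complex ^ 'd ^ 'd"
  assumes "sesqui_analytic K"
    and "hermitian_kernel K"
    and "quasi_invariant_id K"
  shows "\<exists>(\<alpha>::nat \<Rightarrow> complex) (\<beta>::nat \<Rightarrow> complex).
           \<forall>z\<in>ball 0 1. \<forall>w\<in>ball 0 1.
             summable (\<lambda>j. cscale (\<alpha> j) (Khat j z w)) \<and>
             summable (\<lambda>j. cscale (\<beta> (Suc j)) (Kperp (Suc j) z w)) \<and>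
             K z w = (\<Sum>j. cscale (\<alpha> j) (Khat j z w)) + (\<Sum>j. cscale (\<beta> (Suc j)) (Kperp (Suc j) z w))"
proof -
  interpret kern K using assms by unfold_locales
  obtain a b where A: "\<And>t. cmod t < 1 \<Longrightarrow> summable (\<lambda>n. norm (a n * t^n))"
    and B: "\<And>t. cmod t < 1 \<Longrightarrow> summable (\<lambda>n. norm (b n * t^n))"
    and F: "\<And>z w. z \<in> ball 0 1 \<Longrightarrow> w \<in> ball 0 1 \<Longrightarrow> K z w = Fm (\<lambda>t. \<Sum>n. a n * t^n) (\<lambda>t. \<Sum>n. b n * t^n) z w"
    by (rule main_formula) blast
  define d where "d = CARD('d)"
  have d1: "1 \<le> d" by (simp add: d_def Suc_le_eq)
  define \<alpha> where "\<alpha> = (\<lambda>n. a n * fact n)"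
  define \<beta> where "\<beta> = (\<lambda>n. case n of 0 \<Rightarrow> 0 | Suc m \<Rightarrow> a (Suc m) * fact (Suc m) + b m * of_nat (m + d) * fact m)"
  have md: "of_nat (m + d) \<noteq> (0::complex)" for m
  proof -
    have "m + d \<noteq> 0" using d1 by simp
    then show ?thesis by (metis of_nat_eq_0_iff)
  qed
  have main: "summable (\<lambda>j. cscale (\<alpha> j) (Khat j z w)) \<and>
             summable (\<lambda>j. cscale (\<beta> (Suc j)) (Kperp (Suc j) z w)) \<and>
             K z w = (\<Sum>j. cscale (\<alpha> j) (Khat j z w)) + (\<Sum>j. cscale (\<beta> (Suc j)) (Kperp (Suc j) z w))"
    if z: "z \<in> ball 0 1" and w: "w \<in> ball 0 1" for z w
  proof -
    define t where "t = cinner z w"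
    have tb: "cmod t < 1" using cinner_ball[OF z w] by (simp add: t_def)
    define M where "M = outer z w"
    define p where "p = (\<lambda>j. case j of 0 \<Rightarrow> 0 | Suc m \<Rightarrow> a (Suc m) * of_nat (Suc m) / of_nat (m + d) * t^m)"
    have eq1: "cscale (\<alpha> j) (Khat j z w) = cscale (a j * t^j) (mat 1) - cscale (p j) M" for j
    proof (cases j)
      case 0 then show ?thesis by (simp add: \<alpha>_def Khat_def p_def cscale_zero)
    next
      case (Suc m)
      have "Khat j z w = cscale (t^m / (of_nat (m + d) * of_nat (fact m)))
          (cscale (of_nat (m + d) / of_nat (Suc m) * t) (mat 1) - M)"
        by (simp add: Khat_def Suc t_def M_def d_def)
      then have k: "cscale (\<alpha> j) (Khat j z w) =
          cscale (\<alpha> j * (t^m / (of_nat (m + d) * of_nat (fact m))) * (of_nat (m + d) / of_nat (Suc m) * t)) (mat 1)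
          - cscale (\<alpha> j * (t^m / (of_nat (m + d) * of_nat (fact m)))) M"
        by (simp add: cscale_diff cscale_cscale)
      have e2: "\<alpha> j * (t^m / (of_nat (m + d) * of_nat (fact m))) = p j"
        unfolding \<alpha>_def Suc fact_Suc of_nat_fact p_def nat.case by (rule alg1[OF _ md]) simp
      have sm: "(of_nat (Suc m)::complex) \<noteq> 0" by (rule of_nat_neq_0)
      have e1': "p j * (of_nat (m + d) / of_nat (Suc m) * t) = a j * t^j"
        unfolding p_def Suc nat.case power_Suc by (rule alg2[OF sm md])
      have e1: "\<alpha> j * (t^m / (of_nat (m + d) * of_nat (fact m))) * (of_nat (m + d) / of_nat (Suc m) * t) = a j * t^j"
        by (subst e2) (rule e1')
      show ?thesis using k e1 e2 by simp
    qed
    have eq2: "cscale (\<beta> (Suc j)) (Kperp (Suc j) z w) = cscale (p (Suc j) + b j * t^j) M" for j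
    proof -
      have "Kperp (Suc j) z w = cscale (t^j / (of_nat (j + d) * of_nat (fact j))) M"
        by (simp add: Kperp_def t_def M_def d_def)
      moreover have "\<beta> (Suc j) * (t^j / (of_nat (j + d) * of_nat (fact j))) = p (Suc j) + b j * t^j"
        unfolding \<beta>_def p_def nat.case fact_Suc of_nat_fact by (rule alg3[OF _ md]) simp
      ultimately show ?thesis by (simp add: cscale_cscale)
    qed
    have sa: "summable (\<lambda>j. a j * t^j)" using A[OF tb] by (rule summable_norm_cancel)
    have sb: "summable (\<lambda>j. b j * t^j)" using B[OF tb] by (rule summable_norm_cancel)
    have sp1: "summable (\<lambda>j. p (Suc j))"
    proof (rule summable_comparison_test')
      show "summable (\<lambda>j. norm (a (Suc j) * t^j))" by (rule shift_summable[OF A tb])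
      show "norm (p (Suc j)) \<le> norm (a (Suc j) * t^j)" for j
      proof -
        have "real (Suc j) / real (j + d) \<le> 1" using d1 by simp
        then have "norm (a (Suc j) * t^j) * (real (Suc j) / real (j + d)) \<le> norm (a (Suc j) * t^j) * 1"
          by (intro mult_left_mono) auto
        moreover have "norm (p (Suc j)) = norm (a (Suc j) * t^j) * (real (Suc j) / real (j + d))"
          by (simp add: p_def norm_mult norm_divide norm_power norm_of_nat del: of_nat_Suc of_nat_add)
        ultimately show ?thesis by simp
      qed
    qed
    have sp: "summable p" using sp1 by (simp add: summable_Suc_iff)
    have S1: "(\<lambda>j. cscale (\<alpha> j) (Khat j z w)) sums (cscale (\<Sum>j. a j * t^j) (mat 1) - cscale (suminf p) M)"
      unfolding eq1 by (intro sums_diff cscale_sums sa sp)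
    have S2: "(\<lambda>j. cscale (\<beta> (Suc j)) (Kperp (Suc j) z w)) sums cscale (\<Sum>j. p (Suc j) + b j * t^j) M"
      unfolding eq2 by (intro cscale_sums summable_add sp1 sb)
    have p0: "p 0 = 0" by (simp add: p_def)
    have ssum: "(\<Sum>j. p (Suc j) + b j * t^j) = suminf p + (\<Sum>j. b j * t^j)"
      using suminf_add[OF sp1 sb] suminf_split_head[OF sp] p0 by simp
    have "K z w = cscale (\<Sum>n. a n * t^n) (mat 1) + cscale (\<Sum>n. b n * t^n) M"
      using F[OF z w] by (simp add: Fm_def t_def M_def)
    also have "\<dots> = (cscale (\<Sum>j. a j * t^j) (mat 1) - cscale (suminf p) M) + cscale (\<Sum>j. p (Suc j) + b j * t^j) M"
      by (simp add: ssum cscale_add_left)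
    finally show ?thesis using S1 S2 by (simp add: sums_iff)
  qed
  show ?thesis by (rule exI[where x=\<alpha>], rule exI[where x=\<beta>]) (intro ballI main)
qed


end
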